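(* Let $0\le k\le\mu$ be integers. For $f\in L^2(\mathbb{CP}^1,d\iota)$ with $R_\mu^*(f)\ge0$ (positive semidefinite) and every $z\in\mathbb{C}$, $$0\le E_{\mu,k}(f)(z)\le\mathrm{Tr}(R_\mu^*(f)).$$
   Context: $\mathcal{H}_\mu$ is the space of polynomials in one complex variable of degree $\le\mu$, with inner product $\langle f,g\rangle=\int_{\mathbb{C}}f\overline g\,d\iota_\mu$, $d\iota_\tau(z)=\frac{\tau+1}{(1+|z|^2)^\tau}\frac{dA(z)}{\pi(1+|z|^2)^2}$ ($dA$ Lebesgue measure); $d\iota:=d\iota_0$, the $SU(2)$-invariant probability measure on $\mathbb{CP}^1=\mathbb{C}\cup\{\infty\}$. For a function $f$, $R_\mu^*(f)$ is the operator on $\mathcal{H}_\mu$ given by $(R_\mu^*(f)h)(x)=\frac1{\mu+1}\int_{\mathbb{C}}f(z)h(z)(1+x\overline z)^\mu d\iota_\mu(z)$. The Berezin transform is $B_\tau(f)(z)=\int_{\mathbb{C}}\frac{|1+z\overline s|^{2\tau}}{(1+|z|^2)^\tau(1+|s|^2)^\tau}f(s)\,d\iota(s)$, and $E_{\mu,k}(f):=\binom{\mu}{k}\sum_{l=0}^k(-1)^{k-l}\binom{k}{l}B_{\mu-l}(f)$. *)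

theory Defs
  imports "HOL-Analysis.Analysis" "HOL-Library.Complex_Order"
    "HOL-Computational_Algebra.Polynomial"
begin

definition iota_dens :: "nat \<Rightarrow> complex \<Rightarrow> real" where
  "iota_dens tau z = (real tau + 1) / (1 + (cmod z)\<^sup>2) ^ tau / (pi * (1 + (cmod z)\<^sup>2)\<^sup>2)"

definition iota :: "nat \<Rightarrow> complex measure" where
  "iota tau = density lborel (\<lambda>z. ennreal (iota_dens tau z))"

definition Hmu :: "nat \<Rightarrow> (complex \<Rightarrow> complex) set" where
  "Hmu mu = {(\<lambda>x. poly p x) | p. degree p \<le> mu}"

definition inner_H :: "nat \<Rightarrow> (complex \<Rightarrow> complex) \<Rightarrow> (complex \<Rightarrow> complex) \<Rightarrow> complex" where
  "inner_H mu g h = integral\<^sup>L (iota mu) (\<lambda>z. g z * cnj (h z))"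

definition Rstar :: "nat \<Rightarrow> (complex \<Rightarrow> complex) \<Rightarrow> (complex \<Rightarrow> complex) \<Rightarrow> (complex \<Rightarrow> complex)" where
  "Rstar mu f h = (\<lambda>x. 1 / (of_nat mu + 1) *
      integral\<^sup>L (iota mu) (\<lambda>z. f z * h z * (1 + x * cnj z) ^ mu))"

text \<open>Positive semidefiniteness of an operator on H_mu (complex order: real and nonnegative).\<close>
definition psd_H :: "nat \<Rightarrow> ((complex \<Rightarrow> complex) \<Rightarrow> (complex \<Rightarrow> complex)) \<Rightarrow> bool" where
  "psd_H mu T \<longleftrightarrow> (\<forall>h \<in> Hmu mu. 0 \<le> inner_H mu (T h) h)"

definition as_poly :: "(complex \<Rightarrow> complex) \<Rightarrow> complex poly" where
  "as_poly g = (THE p. poly p = g)"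

definition trace_H :: "nat \<Rightarrow> ((complex \<Rightarrow> complex) \<Rightarrow> (complex \<Rightarrow> complex)) \<Rightarrow> complex" where
  "trace_H mu T = (\<Sum>j\<le>mu. coeff (as_poly (T (\<lambda>x. x ^ j))) j)"

definition berezin :: "nat \<Rightarrow> (complex \<Rightarrow> complex) \<Rightarrow> complex \<Rightarrow> complex" where
  "berezin tau f z = integral\<^sup>L (iota 0)
     (\<lambda>s. complex_of_real ((cmod (1 + z * cnj s)) ^ (2 * tau)
            / ((1 + (cmod z)\<^sup>2) ^ tau * (1 + (cmod s)\<^sup>2) ^ tau)) * f s)"

definition E_op :: "nat \<Rightarrow> nat \<Rightarrow> (complex \<Rightarrow> complex) \<Rightarrow> complex \<Rightarrow> complex" where
  "E_op mu k f z = of_nat (mu choose k) *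
     (\<Sum>l = 0..k. (-1) ^ (k - l) * of_nat (k choose l) * berezin (mu - l) f z)"

text \<open>f in L^2(CP^1, d iota) (the point at infinity is a null set).\<close>
definition L2_iota :: "(complex \<Rightarrow> complex) \<Rightarrow> bool" where
  "L2_iota f \<longleftrightarrow> f \<in> borel_measurable lborel \<and> integrable (iota 0) (\<lambda>z. (cmod (f z))\<^sup>2)"

end

theory Submission
  imports Defs "HOL-Real_Asymp.Real_Asymp"
begin


lemma borel_measurable_Complex[measurable (raw)]:
  assumes "f \<in> borel_measurable M" "g \<in> borel_measurable M"
  shows "(\<lambda>x. Complex (f x) (g x)) \<in> borel_measurable M"
proof -
  have "(\<lambda>x. complex_of_real (f x) + \<i> * complex_of_real (g x)) \<in> borel_measurable M"
    using assms by measurable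
  then show ?thesis by (simp add: Complex_eq)
qed

lemma borel_measurable_cnj[measurable (raw)]:
  assumes "f \<in> borel_measurable M"
  shows "(\<lambda>x. cnj (f x)) \<in> borel_measurable M"
proof -
  have "(\<lambda>x. Complex (Re (f x)) (- Im (f x))) \<in> borel_measurable M"
    using assms by measurable
  moreover have "cnj z = Complex (Re z) (- Im z)" for z by (simp add: complex_eq_iff)
  ultimately show ?thesis by simp
qed

lemma lborel_complex_pair:
  "distr (lborel \<Otimes>\<^sub>M lborel) borel (\<lambda>p. Complex (fst p) (snd p)) = (lborel :: complex measure)"
proof (rule lborel_eqI[symmetric])
  fix l u :: complex
  assume le: "\<And>b. b \<in> Basis \<Longrightarrow> l \<bullet> b \<le> u \<bullet> b"
  have le1: "Re l \<le> Re u" using le[of 1] by (simp add: inner_complex_def)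
  have le2: "Im l \<le> Im u" using le[of \<i>] by (simp add: inner_complex_def)
  have pre: "(\<lambda>p. Complex (fst p) (snd p)) -` box l u \<inter> space (lborel \<Otimes>\<^sub>M lborel)
      = {Re l<..<Re u} \<times> {Im l<..<Im u}"
    by (auto simp: mem_box Basis_complex_def inner_complex_def space_pair_measure)
  have "emeasure (distr (lborel \<Otimes>\<^sub>M lborel) borel (\<lambda>p. Complex (fst p) (snd p))) (box l u)
     = emeasure (lborel \<Otimes>\<^sub>M lborel) ({Re l<..<Re u} \<times> {Im l<..<Im u})"
    by (subst emeasure_distr) (auto simp: pre)
  also have "\<dots> = ennreal (Re u - Re l) * ennreal (Im u - Im l)"
    by (simp add: lborel.emeasure_pair_measure_Times le1 le2)
  also have "\<dots> = (\<Prod>b\<in>Basis. (u - l) \<bullet> b)"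
    by (simp add: Basis_complex_def inner_complex_def ennreal_mult le1 le2)
  finally show "emeasure (distr (lborel \<Otimes>\<^sub>M lborel) borel (\<lambda>p. Complex (fst p) (snd p))) (box l u)
     = (\<Prod>b\<in>Basis. (u - l) \<bullet> b)" .
qed simp

lemma nn_integral_complex_ab:
  fixes F :: "complex \<Rightarrow> ennreal"
  assumes [measurable]: "F \<in> borel_measurable borel"
  shows "(\<integral>\<^sup>+x. F x \<partial>lborel) = (\<integral>\<^sup>+a. \<integral>\<^sup>+b. F (Complex a b) \<partial>lborel \<partial>lborel)"
proof -
  have "(\<integral>\<^sup>+x. F x \<partial>lborel) = (\<integral>\<^sup>+x. F x \<partial>distr (lborel \<Otimes>\<^sub>M lborel) borel (\<lambda>p. Complex (fst p) (snd p)))"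
    by (simp add: lborel_complex_pair)
  also have "\<dots> = (\<integral>\<^sup>+p. F (Complex (fst p) (snd p)) \<partial>(lborel \<Otimes>\<^sub>M lborel))"
    by (subst nn_integral_distr) auto
  also have "\<dots> = (\<integral>\<^sup>+a. \<integral>\<^sup>+b. F (Complex a b) \<partial>lborel \<partial>lborel)"
    by (subst lborel.nn_integral_fst[symmetric]) auto
  finally show ?thesis .
qed

lemma nn_integral_complex_ba:
  fixes F :: "complex \<Rightarrow> ennreal"
  assumes [measurable]: "F \<in> borel_measurable borel"
  shows "(\<integral>\<^sup>+x. F x \<partial>lborel) = (\<integral>\<^sup>+b. \<integral>\<^sup>+a. F (Complex a b) \<partial>lborel \<partial>lborel)"
  unfolding nn_integral_complex_ab[OF assms]
  by (rule lborel_pair.Fubini'[symmetric]) auto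

lemma nn_integral_real_shift:
  fixes g :: "real \<Rightarrow> ennreal"
  assumes [measurable]: "g \<in> borel_measurable borel"
  shows "(\<integral>\<^sup>+a. g (a + t) \<partial>lborel) = (\<integral>\<^sup>+a. g a \<partial>lborel)"
proof -
  have "(\<integral>\<^sup>+a. g a \<partial>lborel) = (\<integral>\<^sup>+a. g a \<partial>distr lborel borel ((+) t))"
    by (simp add: lborel_distr_plus)
  also have "\<dots> = (\<integral>\<^sup>+a. g (t + a) \<partial>lborel)"
    by (subst nn_integral_distr) auto
  finally show ?thesis by (simp add: add.commute)
qed

definition shx :: "real \<Rightarrow> complex \<Rightarrow> complex" where
  "shx c x = Complex (Re x + c * Im x) (Im x)"
definition shy :: "real \<Rightarrow> complex \<Rightarrow> complex" where
  "shy c x = Complex (Re x) (Im x + c * Re x)"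

lemma shx_measurable[measurable]: "shx c \<in> borel_measurable borel"
  unfolding shx_def by measurable
lemma shy_measurable[measurable]: "shy c \<in> borel_measurable borel"
  unfolding shy_def by measurable

lemma nn_integral_shx:
  fixes F :: "complex \<Rightarrow> ennreal"
  assumes [measurable]: "F \<in> borel_measurable borel"
  shows "(\<integral>\<^sup>+x. F (shx c x) \<partial>lborel) = (\<integral>\<^sup>+x. F x \<partial>lborel)"
proof -
  have "(\<integral>\<^sup>+x. F (shx c x) \<partial>lborel) = (\<integral>\<^sup>+b. \<integral>\<^sup>+a. F (Complex (a + c * b) b) \<partial>lborel \<partial>lborel)"
    by (subst nn_integral_complex_ba) (auto simp: shx_def)
  also have "\<dots> = (\<integral>\<^sup>+b. \<integral>\<^sup>+a. F (Complex a b) \<partial>lborel \<partial>lborel)"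
    by (intro nn_integral_cong nn_integral_real_shift[where g="\<lambda>a. F (Complex a _)"]) auto
  also have "\<dots> = (\<integral>\<^sup>+x. F x \<partial>lborel)"
    by (subst nn_integral_complex_ba) auto
  finally show ?thesis .
qed

lemma nn_integral_shy:
  fixes F :: "complex \<Rightarrow> ennreal"
  assumes [measurable]: "F \<in> borel_measurable borel"
  shows "(\<integral>\<^sup>+x. F (shy c x) \<partial>lborel) = (\<integral>\<^sup>+x. F x \<partial>lborel)"
proof -
  have "(\<integral>\<^sup>+x. F (shy c x) \<partial>lborel) = (\<integral>\<^sup>+a. \<integral>\<^sup>+b. F (Complex a (b + c * a)) \<partial>lborel \<partial>lborel)"
    by (subst nn_integral_complex_ab) (auto simp: shy_def)
  also have "\<dots> = (\<integral>\<^sup>+a. \<integral>\<^sup>+b. F (Complex a b) \<partial>lborel \<partial>lborel)"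
    by (intro nn_integral_cong nn_integral_real_shift[where g="\<lambda>b. F (Complex _ b)"]) auto
  also have "\<dots> = (\<integral>\<^sup>+x. F x \<partial>lborel)"
    by (subst nn_integral_complex_ab) auto
  finally show ?thesis .
qed

lemma distr_preserving_from_nn:
  fixes T :: "complex \<Rightarrow> complex"
  assumes [measurable]: "T \<in> borel_measurable borel"
  assumes nn: "\<And>F. F \<in> borel_measurable borel \<Longrightarrow> (\<integral>\<^sup>+x. F (T x) \<partial>lborel) = (\<integral>\<^sup>+x. F x \<partial>lborel)"
  shows "distr lborel borel T = lborel"
proof (rule measure_eqI)
  fix A assume A: "A \<in> sets (distr lborel borel T)"
  then have [measurable]: "A \<in> sets borel" by simp
  have "emeasure (distr lborel borel T) A = (\<integral>\<^sup>+x. indicator A x \<partial>distr lborel borel T)"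
    by (simp add: nn_integral_indicator)
  also have "\<dots> = (\<integral>\<^sup>+x. indicator A (T x) \<partial>lborel)"
    by (subst nn_integral_distr) auto
  also have "\<dots> = (\<integral>\<^sup>+x. indicator A x \<partial>lborel)"
    by (rule nn) simp
  also have "\<dots> = emeasure lborel A" by simp
  finally show "emeasure (distr lborel borel T) A = emeasure lborel A" .
qed simp

lemma distr_shx: "distr lborel borel (shx c) = lborel"
  by (rule distr_preserving_from_nn) (auto intro: nn_integral_shx)
lemma distr_shy: "distr lborel borel (shy c) = lborel"
  by (rule distr_preserving_from_nn) (auto intro: nn_integral_shy)

lemma distr_rotation:
  fixes u :: complex
  assumes u: "cmod u = 1" "u \<noteq> -1"
  shows "distr lborel borel (\<lambda>x. u * x) = lborel"
proof -
  define c s where "c = Re u" and "s = Im u"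
  have cs: "c^2 + s^2 = 1" using u(1) unfolding c_def s_def cmod_def
    by (simp add: power2_eq_square)
  have c1: "1 + c \<noteq> 0"
  proof
    assume "1 + c = 0"
    then have "c = -1" by simp
    with cs have "s = 0" by (simp add: power2_eq_square)
    with \<open>c = -1\<close> have "u = -1" unfolding c_def s_def by (simp add: complex_eq_iff)
    with u(2) show False by simp
  qed
  define t where "t = s / (1 + c)"
  have ts: "t * s = 1 - c"
  proof -
    have "t * s = s^2 / (1 + c)" by (simp add: t_def power2_eq_square)
    also have "\<dots> = (1 - c^2) / (1 + c)" using cs by (simp add: algebra_simps)
    also have "\<dots> = (1 - c) * (1 + c) / (1 + c)" by (simp add: algebra_simps power2_eq_square)
    also have "\<dots> = 1 - c" using c1 by simp
    finally show ?thesis .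
  qed
  have t1c: "t * (1 + c) = s" using c1 by (simp add: t_def)
  have eq: "(\<lambda>x. u * x) = shx (-t) \<circ> shy s \<circ> shx (-t)"
  proof
    fix x
    have "Re (u * x) = c * Re x - s * Im x" "Im (u * x) = s * Re x + c * Im x"
      by (simp_all add: c_def s_def)
    moreover have "Re x + - t * Im x + - t * (Im x + s * (Re x + - t * Im x)) = c * Re x - s * Im x"
    proof -
      have "Re x + - t * Im x + - t * (Im x + s * (Re x + - t * Im x))
          = Re x * (1 - t * s) - Im x * (t * (1 + (1 - t * s)))" by (simp add: algebra_simps)
      also have "\<dots> = c * Re x - s * Im x"
      proof -
        have e1: "1 - t * s = c" using ts by simp
        have e2: "t * (1 + (1 - t * s)) = s" using t1c e1 by simp
        show ?thesis unfolding e1 e2 using t1c by (simp add: mult.commute)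
      qed
      finally show ?thesis .
    qed
    moreover have "Im x + s * (Re x + - t * Im x) = s * Re x + c * Im x"
    proof -
      have "Im x + s * (Re x + - t * Im x) = s * Re x + Im x * (1 - t * s)" by (simp add: algebra_simps)
      also have "\<dots> = s * Re x + c * Im x" using ts by simp
      finally show ?thesis .
    qed
    ultimately show "u * x = (shx (-t) \<circ> shy s \<circ> shx (-t)) x"
      by (simp add: shx_def shy_def complex_eq_iff)
  qed
  have "distr lborel borel (shx (-t) \<circ> shy s \<circ> shx (-t))
      = distr (distr (distr lborel borel (shx (-t))) borel (shy s)) borel (shx (-t))"
    by (simp add: distr_distr comp_assoc)
  also have "\<dots> = lborel" by (simp add: distr_shx distr_shy)
  finally show ?thesis by (subst eq)
qed


lemma sets_borel_Iio: "sets (borel::real measure) = sigma_sets UNIV (range lessThan)"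
  by (metis borel_Iio sets_measure_of top_greatest Pow_UNIV)

lemma emeasure_normsq_lessThan:
  "emeasure lborel {x::complex. (cmod x)^2 < a} = ennreal (pi * max a 0)"
proof (cases "a \<le> 0")
  case True
  then have "{x::complex. (cmod x)^2 < a} = {}"
    by auto (smt (verit) zero_le_power2)
  then show ?thesis using True by simp
next
  case False
  then have "{x::complex. (cmod x)^2 < a} = ball 0 (sqrt a)"
  proof -
    have "cmod x < sqrt a \<longleftrightarrow> (cmod x)^2 < a" for x :: complex
    proof -
      have "sqrt ((cmod x)^2) = cmod x" by simp
      then have "cmod x < sqrt a \<longleftrightarrow> sqrt ((cmod x)^2) < sqrt a" by simp
      also have "\<dots> \<longleftrightarrow> (cmod x)^2 < a" by (rule real_sqrt_less_iff)
      finally show ?thesis .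
    qed
    then show ?thesis by (simp add: set_eq_iff mem_ball dist_norm)
  qed
  moreover have "emeasure lborel (ball (0::complex) (sqrt a)) = ennreal (pi * a)"
    using False by (subst emeasure_ball) (auto simp: unit_ball_vol_2)
  ultimately show ?thesis using False by simp
qed

lemma distr_normsq:
  "distr lborel borel (\<lambda>x::complex. (cmod x)^2) = density lborel (\<lambda>t. ennreal pi * indicator {0..} t)"
proof (rule measure_eqI_generator_eq[where E="range lessThan" and \<Omega>=UNIV and A="\<lambda>i. {..<real i}"])
  show "Int_stable (range lessThan :: real set set)"
    unfolding Int_stable_def
  proof (clarify)
    fix a b :: real
    show "{..<a} \<inter> {..<b} \<in> range lessThan"
      by (rule image_eqI[where x="min a b"]) auto
  qed
  show "range lessThan \<subseteq> Pow (UNIV::real set)" by simp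
  show "sets (distr lborel borel (\<lambda>x::complex. (cmod x)^2)) = sigma_sets UNIV (range lessThan)"
    by (simp add: sets_borel_Iio)
  show "sets (density lborel (\<lambda>t::real. ennreal pi * indicator {0..} t)) = sigma_sets UNIV (range lessThan)"
    using sets_borel_Iio by (simp only: sets_density sets_lborel)
  show "range (\<lambda>i. {..<real i}) \<subseteq> range lessThan" by auto
  show "(\<Union>i. {..<real i}) = UNIV" by (auto intro: reals_Archimedean2)
  have em: "emeasure (distr lborel borel (\<lambda>x::complex. (cmod x)^2)) {..<a} = ennreal (pi * max a 0)" for a
  proof -
    have "emeasure (distr lborel borel (\<lambda>x::complex. (cmod x)^2)) {..<a}
        = emeasure lborel {x::complex. (cmod x)^2 < a}"
      by (subst emeasure_distr) (auto intro!: arg_cong[where f="emeasure lborel"])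
    then show ?thesis by (simp add: emeasure_normsq_lessThan)
  qed
  show "emeasure (distr lborel borel (\<lambda>x::complex. (cmod x)^2)) {..<real i} \<noteq> \<infinity>" for i
    by (simp add: em)
  fix X :: "real set" assume "X \<in> range lessThan"
  then obtain a where X: "X = {..<a}" by auto
  have "emeasure (density lborel (\<lambda>t::real. ennreal pi * indicator {0..} t)) {..<a}
      = (\<integral>\<^sup>+t. ennreal pi * indicator {0..<a} t \<partial>lborel)"
    by (subst emeasure_density) (auto intro!: nn_integral_cong simp: indicator_def)
  also have "\<dots> = ennreal (pi * max a 0)"
    by (subst nn_integral_cmult) (auto simp: ennreal_mult max_def)
  finally show "emeasure (distr lborel borel (\<lambda>x::complex. (cmod x)^2)) X
      = emeasure (density lborel (\<lambda>t. ennreal pi * indicator {0..} t)) X"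
    using em X by simp
qed

lemma nn_integral_radial:
  fixes V :: "real \<Rightarrow> ennreal"
  assumes [measurable]: "V \<in> borel_measurable borel"
  shows "(\<integral>\<^sup>+x. V ((cmod x)^2) \<partial>(lborel::complex measure)) = ennreal pi * (\<integral>\<^sup>+t. V t * indicator {0..} t \<partial>lborel)"
proof -
  have "(\<integral>\<^sup>+x. V ((cmod x)^2) \<partial>(lborel::complex measure))
      = (\<integral>\<^sup>+t. V t \<partial>distr lborel borel (\<lambda>x::complex. (cmod x)^2))"
    by (subst nn_integral_distr) auto
  also have "\<dots> = (\<integral>\<^sup>+t. ennreal pi * indicator {0..} t * V t \<partial>lborel)"
    by (simp add: distr_normsq nn_integral_density)
  also have "\<dots> = ennreal pi * (\<integral>\<^sup>+t. V t * indicator {0..} t \<partial>lborel)"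
    by (subst nn_integral_cmult[symmetric]) (auto intro!: nn_integral_cong simp: mult_ac)
  finally show ?thesis .
qed


lemma ennreal_add_eq_ennreal_solve:
  fixes X :: ennreal
  assumes "X + ennreal b = ennreal c" "0 \<le> b" "b \<le> c"
  shows "X = ennreal (c - b)"
proof (cases X rule: ennreal_cases)
  case (real r)
  then have "ennreal (r + b) = ennreal c" using assms by (simp add: ennreal_plus)
  then have "r + b = c" using real assms by (subst (asm) ennreal_inj) auto
  then show ?thesis using real by simp
next
  case top
  then show ?thesis using assms by simp
qed

lemma I_base:
  "(\<integral>\<^sup>+t. ennreal (1 / (1 + t)^(Suc (Suc n))) * indicator {0..} t \<partial>lborel) = ennreal (1 / (real n + 1))"
proof -
  define F where "F t = (- 1 / (real n + 1)) * inverse ((1 + t)^(Suc n))" for t :: real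
  have "(\<integral>\<^sup>+t. ennreal (1 / (1 + t)^(Suc (Suc n))) * indicator {0..} t \<partial>lborel) = ennreal (0 - F 0)"
  proof (rule nn_integral_FTC_atLeast)
    show "(\<lambda>t::real. 1 / (1 + t)^(Suc (Suc n))) \<in> borel_measurable borel" by measurable
    show "0 \<le> 1 / (1 + x)^(Suc (Suc n))" if "0 \<le> x" for x :: real using that by simp
    show "DERIV F x :> 1 / (1 + x)^(Suc (Suc n))" if "0 \<le> x" for x :: real
    proof -
      have pos: "1 + x > 0" using that by simp
      have d1: "DERIV (\<lambda>t. 1 + t) x :> 1" by (auto intro!: derivative_eq_intros)
      have nz: "(1 + x)^(Suc n) \<noteq> 0" using pos by simp
      note d3 = DERIV_cmult[OF DERIV_inverse_fun[OF DERIV_power_Suc[OF d1, of n] nz], of "- 1 / (real n + 1)"]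
      have p2: "((1 + x)^(Suc n))^(Suc (Suc 0)) = (1 + x)^n * (1 + x) ^ (Suc (Suc n))"
        by (simp add: algebra_simps)
      show ?thesis unfolding F_def
      proof (rule DERIV_cong[OF d3])
        show "- 1 / (real n + 1) * - ((1 + of_nat n) * (1 * (1 + x) ^ n) * inverse (((1 + x) ^ Suc n) ^ Suc (Suc 0)))
            = 1 / (1 + x) ^ Suc (Suc n)"
        proof -
          have gen: "\<And>P Q. P \<noteq> 0 \<Longrightarrow> Q \<noteq> 0 \<Longrightarrow>
              - 1 / (real n + 1) * - ((1 + of_nat n) * (1 * P) * inverse (P * Q)) = 1 / (Q::real)"
          proof -
            fix P Q :: real assume PQ: "P \<noteq> 0" "Q \<noteq> 0"
            have "- 1 / (real n + 1) * - ((1 + of_nat n) * (1 * P) * inverse (P * Q))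
                = ((1 + real n) / (real n + 1)) * (P * inverse P) * inverse Q"
              by (simp add: inverse_mult_distrib)
            also have "\<dots> = 1 / Q" using PQ by (simp add: add.commute divide_inverse)
            finally show "- 1 / (real n + 1) * - ((1 + of_nat n) * (1 * P) * inverse (P * Q)) = 1 / Q" .
          qed
          show ?thesis unfolding p2 by (rule gen) (use pos in simp_all)
        qed
      qed
    qed
    show "(F \<longlongrightarrow> 0) at_top"
      unfolding F_def by real_asymp
  qed
  also have "0 - F 0 = 1 / (real n + 1)" by (simp add: F_def)
  finally show ?thesis .
qed

lemma I_gen:
  "(\<integral>\<^sup>+t. ennreal (t^j / (1 + t)^(j + 2 + n)) * indicator {0..} t \<partial>lborel)
     = ennreal (fact j * fact n / fact (j + n + 1))"
proof (induction j arbitrary: n)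
  case 0
  show ?case using I_base[of n] by (simp add: add.commute)
next
  case (Suc j)
  let ?I = "\<lambda>j n. (\<integral>\<^sup>+t. ennreal (t^j / (1 + t)^(j + 2 + n)) * indicator {0..} t \<partial>lborel)"
  have "?I (Suc j) n + ?I j (Suc n) = (\<integral>\<^sup>+t. ennreal (t^(Suc j) / (1 + t)^(Suc j + 2 + n)) * indicator {0..} t
        + ennreal (t^j / (1 + t)^(j + 2 + Suc n)) * indicator {0..} t \<partial>lborel)"
    by (rule nn_integral_add[symmetric]) auto
  also have "\<dots> = ?I j n"
  proof (rule nn_integral_cong)
    fix t :: real
    show "ennreal (t^(Suc j) / (1 + t)^(Suc j + 2 + n)) * indicator {0..} t
        + ennreal (t^j / (1 + t)^(j + 2 + Suc n)) * indicator {0..} t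
        = ennreal (t^j / (1 + t)^(j + 2 + n)) * indicator {0..} t"
    proof (cases "0 \<le> t")
      case True
      have pos: "1 + t > 0" using True by simp
      have "t^(Suc j) / (1 + t)^(Suc j + 2 + n) + t^j / (1 + t)^(j + 2 + Suc n)
          = t^j / (1 + t)^(j + 2 + n)"
      proof -
        have e: "Suc j + 2 + n = Suc (j + 2 + n)" "j + 2 + Suc n = Suc (j + 2 + n)" by simp_all
        have "t^(Suc j) / (1 + t)^(Suc j + 2 + n) + t^j / (1 + t)^(j + 2 + Suc n)
            = (t^j * (t + 1)) / ((1 + t) * (1 + t)^(j + 2 + n))"
          unfolding e by (simp add: add_divide_distrib algebra_simps)
        also have "\<dots> = t^j / (1 + t)^(j + 2 + n)" using pos by (simp add: add.commute)
        finally show ?thesis .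
      qed
      then show ?thesis using True
        by (simp add: ennreal_plus[symmetric] del: ennreal_plus)
    next
      case False
      then show ?thesis by simp
    qed
  qed
  finally have eq: "?I (Suc j) n + ennreal (fact j * fact (Suc n) / fact (j + Suc n + 1))
      = ennreal (fact j * fact n / fact (j + n + 1))"
    using Suc.IH[of n] Suc.IH[of "Suc n"] by simp
  have alg: "fact j * fact n / fact (j + n + 1) - fact j * fact (Suc n) / fact (j + Suc n + 1)
      = (fact (Suc j) * fact n / fact (Suc j + n + 1) :: real)"
  proof -
    have f1: "fact (j + Suc n + 1) = (real (j + n + 2)) * (fact (j + n + 1) :: real)"
      by (simp add: fact_Suc algebra_simps)
    have f2: "fact (Suc j + n + 1) = (real (j + n + 2)) * (fact (j + n + 1) :: real)"
      by (simp add: fact_Suc algebra_simps)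
    have f3: "fact (Suc n) = real (n + 1) * (fact n :: real)" by (simp add: fact_Suc)
    have f4: "fact (Suc j) = real (j + 1) * (fact j :: real)" by (simp add: fact_Suc)
    have pz: "(fact (j + n + 1) :: real) > 0" by simp
    have gen0: "\<And>a b F p q :: real. F > 0 \<Longrightarrow> p + q > 0 \<Longrightarrow>
       a * b / F - a * (p * b) / ((p + q) * F) = q * a * b / ((p + q) * F)"
    proof -
      fix a b F p q :: real assume F: "F > 0" and pq: "p + q > 0"
      have "a * b / F = a * b * (p + q) / ((p + q) * F)" using F pq by simp
      then show "a * b / F - a * (p * b) / ((p + q) * F) = q * a * b / ((p + q) * F)"
        by (simp add: diff_divide_distrib[symmetric] algebra_simps)
    qed
    have gen: "\<And>a b F :: real. F > 0 \<Longrightarrow>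
       a * b / F - a * (real (n + 1) * b) / (real (j + n + 2) * F) = real (j + 1) * a * b / (real (j + n + 2) * F)"
    proof -
      fix a b F :: real assume "F > 0"
      have e: "real (j + n + 2) = real (n + 1) + real (j + 1)" by simp
      show "a * b / F - a * (real (n + 1) * b) / (real (j + n + 2) * F) = real (j + 1) * a * b / (real (j + n + 2) * F)"
        unfolding e by (rule gen0) (use \<open>F > 0\<close> in auto)
    qed
    show ?thesis unfolding f1 f2 f3 f4 using gen[OF pz] by (simp add: mult.assoc)
  qed
  have nn: "0 \<le> (fact (Suc j) * fact n / fact (Suc j + n + 1) :: real)" by simp
  have le: "fact j * fact (Suc n) / fact (j + Suc n + 1) \<le> (fact j * fact n / fact (j + n + 1) :: real)"
    using alg nn by linarith
  have "?I (Suc j) n = ennreal (fact j * fact n / fact (j + n + 1) - fact j * fact (Suc n) / fact (j + Suc n + 1))"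
    by (rule ennreal_add_eq_ennreal_solve[OF eq _ le]) simp
  then show ?case unfolding alg .
qed


lemma iota_dens_nonneg: "0 \<le> iota_dens tau z"
  unfolding iota_dens_def by simp

lemma onepos: "0 < 1 + (cmod z)^2"
  by (metis add_pos_nonneg zero_less_one zero_le_power2)

lemma iota_dens_pos: "0 < iota_dens tau z"
  unfolding iota_dens_def using onepos[of z] by (intro divide_pos_pos mult_pos_pos) auto

lemma iota_dens_measurable[measurable]: "iota_dens tau \<in> borel_measurable borel"
  unfolding iota_dens_def by measurable

lemma sets_iota[simp, measurable_cong]: "sets (iota tau) = sets borel"
  by (simp add: iota_def)

lemma space_iota[simp]: "space (iota tau) = UNIV"
  by (simp add: iota_def)

lemma measurable_iota1[simp]: "measurable (iota tau) N = measurable borel N"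
  by (simp cong: measurable_cong_sets)

lemma iota_dens_rel:
  "iota_dens mu x = (real mu + 1) / (1 + (cmod x)^2)^mu * iota_dens 0 x"
  unfolding iota_dens_def by (simp add: field_simps)

definition wt :: "nat \<Rightarrow> complex \<Rightarrow> real" where
  "wt mu x = (1 + (cmod x)^2)^mu"

lemma wt_pos: "0 < wt mu x"
  unfolding wt_def using onepos[of x] by simp

lemma wt_measurable[measurable]: "wt mu \<in> borel_measurable borel"
  unfolding wt_def by measurable

lemma integral_iota_transfer:
  fixes F :: "complex \<Rightarrow> complex"
  assumes [measurable]: "F \<in> borel_measurable borel"
  shows "integral\<^sup>L (iota mu) F = (real mu + 1) * integral\<^sup>L (iota 0) (\<lambda>x. F x / complex_of_real (wt mu x))"
proof -
  have "integral\<^sup>L (iota mu) F = integral\<^sup>L lborel (\<lambda>x. iota_dens mu x *\<^sub>R F x)"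
    unfolding iota_def by (rule integral_density) (auto simp: iota_dens_nonneg)
  also have "\<dots> = integral\<^sup>L lborel (\<lambda>x. iota_dens 0 x *\<^sub>R (complex_of_real (real mu + 1) * (F x / complex_of_real (wt mu x))))"
    by (intro Bochner_Integration.integral_cong refl) (simp add: iota_dens_rel[of mu] scaleR_conv_of_real field_simps wt_def)
  also have "\<dots> = integral\<^sup>L (iota 0) (\<lambda>x. complex_of_real (real mu + 1) * (F x / complex_of_real (wt mu x)))"
    unfolding iota_def by (rule integral_density[symmetric]) (auto simp: iota_dens_nonneg)
  also have "\<dots> = (real mu + 1) * integral\<^sup>L (iota 0) (\<lambda>x. F x / complex_of_real (wt mu x))"
    by (rule integral_mult_right_zero)
  finally show ?thesis .
qed

lemma integrable_iota_transfer:
  fixes F :: "complex \<Rightarrow> complex"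
  assumes [measurable]: "F \<in> borel_measurable borel"
  shows "integrable (iota mu) F \<longleftrightarrow> integrable (iota 0) (\<lambda>x. F x / complex_of_real (wt mu x))"
proof -
  have "integrable (iota mu) F \<longleftrightarrow> integrable lborel (\<lambda>x. iota_dens mu x *\<^sub>R F x)"
    unfolding iota_def by (rule integrable_density) (auto simp: iota_dens_nonneg)
  also have "\<dots> \<longleftrightarrow> integrable lborel (\<lambda>x. (real mu + 1) *\<^sub>R (iota_dens 0 x *\<^sub>R (F x / complex_of_real (wt mu x))))"
    by (intro Bochner_Integration.integrable_cong refl) (simp add: iota_dens_rel[of mu] scaleR_conv_of_real field_simps wt_def)
  also have "\<dots> \<longleftrightarrow> integrable lborel (\<lambda>x. iota_dens 0 x *\<^sub>R (F x / complex_of_real (wt mu x)))"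
  proof
    assume "integrable lborel (\<lambda>x. (real mu + 1) *\<^sub>R (iota_dens 0 x *\<^sub>R (F x / complex_of_real (wt mu x))))"
    then have "integrable lborel (\<lambda>x. (1 / (real mu + 1)) *\<^sub>R ((real mu + 1) *\<^sub>R (iota_dens 0 x *\<^sub>R (F x / complex_of_real (wt mu x)))))"
      by (rule integrable_scaleR_right)
    then show "integrable lborel (\<lambda>x. iota_dens 0 x *\<^sub>R (F x / complex_of_real (wt mu x)))"
      by simp
  qed (rule integrable_scaleR_right)
  also have "\<dots> \<longleftrightarrow> integrable (iota 0) (\<lambda>x. F x / complex_of_real (wt mu x))"
    unfolding iota_def by (rule integrable_density[symmetric]) (auto simp: iota_dens_nonneg)
  finally show ?thesis .
qed


lemma nn_moment:
  assumes "j \<le> mu"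
  shows "(\<integral>\<^sup>+x. ennreal (iota_dens mu x * (cmod x)^(2*j)) \<partial>lborel) = ennreal (1 / real (mu choose j))"
proof -
  define V where "V t = ((real mu + 1) / pi) * (t^j / (1 + t)^(j + 2 + (mu - j)))" for t :: real
  have "iota_dens mu x * (cmod x)^(2*j) = V ((cmod x)^2)" for x
  proof -
    have e: "j + 2 + (mu - j) = mu + 2" using assms by simp
    have gen: "\<And>t::real. 0 < 1 + t \<Longrightarrow> (real mu + 1) / (1 + t)^mu / (pi * (1 + t)\<^sup>2) * t^j
        = ((real mu + 1) / pi) * (t^j / (1 + t)^(mu + 2))"
    proof -
      fix t :: real assume "0 < 1 + t"
      have gen0: "\<And>a P Q pp tj :: real. a / P / (pp * Q) * tj = (a / pp) * (tj / (P * Q))"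
        by (simp add: divide_inverse inverse_mult_distrib ac_simps)
      show "(real mu + 1) / (1 + t)^mu / (pi * (1 + t)\<^sup>2) * t^j
        = ((real mu + 1) / pi) * (t^j / (1 + t)^(mu + 2))"
        unfolding power_add by (rule gen0)
    qed
    have "(cmod x)^(2*j) = ((cmod x)^2)^j" by (simp add: power_mult)
    then show ?thesis unfolding V_def iota_dens_def e using gen[OF onepos[of x]] by simp
  qed
  then have "(\<integral>\<^sup>+x. ennreal (iota_dens mu x * (cmod x)^(2*j)) \<partial>lborel)
      = (\<integral>\<^sup>+x. ennreal (V ((cmod x)^2)) \<partial>lborel)" by simp
  also have "\<dots> = ennreal pi * (\<integral>\<^sup>+t. ennreal (V t) * indicator {0..} t \<partial>lborel)"
    by (rule nn_integral_radial) (simp add: V_def)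
  also have "(\<integral>\<^sup>+t. ennreal (V t) * indicator {0..} t \<partial>lborel)
      = ennreal ((real mu + 1) / pi) * (\<integral>\<^sup>+t. ennreal (t^j / (1 + t)^(j + 2 + (mu - j))) * indicator {0..} t \<partial>lborel)"
  proof -
    have "ennreal (V t) * indicator {0..} t
        = ennreal ((real mu + 1) / pi) * (ennreal (t^j / (1 + t)^(j + 2 + (mu - j))) * indicator {0..} t)" for t
      unfolding V_def by (subst ennreal_mult') (auto simp: mult.assoc)
    then have "(\<integral>\<^sup>+t. ennreal (V t) * indicator {0..} t \<partial>lborel)
      = (\<integral>\<^sup>+t. ennreal ((real mu + 1) / pi) * (ennreal (t^j / (1 + t)^(j + 2 + (mu - j))) * indicator {0..} t) \<partial>lborel)"
      by (simp only:)
    also have "\<dots> = ennreal ((real mu + 1) / pi) * (\<integral>\<^sup>+t. ennreal (t^j / (1 + t)^(j + 2 + (mu - j))) * indicator {0..} t \<partial>lborel)"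
      by (rule nn_integral_cmult) measurable
    finally show ?thesis .
  qed
  also have "\<dots> = ennreal ((real mu + 1) / pi) * ennreal (fact j * fact (mu - j) / fact (j + (mu - j) + 1))"
    by (simp only: I_gen)
  finally have fin: "(\<integral>\<^sup>+x. ennreal (iota_dens mu x * (cmod x)^(2*j)) \<partial>lborel)
      = ennreal pi * (ennreal ((real mu + 1) / pi) * ennreal (fact j * fact (mu - j) / fact (j + (mu - j) + 1)))" .
  have "(\<integral>\<^sup>+x. ennreal (iota_dens mu x * (cmod x)^(2*j)) \<partial>lborel)
      = ennreal (pi * ((real mu + 1) / pi) * (fact j * fact (mu - j) / fact (j + (mu - j) + 1)))"
  proof -
    define A where "A = (real mu + 1) / pi"
    define B where "B = (fact j * fact (mu - j) / fact (j + (mu - j) + 1) :: real)"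
    have a0: "0 \<le> A" unfolding A_def by simp
    have b0: "0 \<le> B" unfolding B_def by simp
    have "ennreal pi * (ennreal A * ennreal B) = ennreal (pi * A * B)"
      using a0 b0 by (metis ennreal_mult pi_ge_zero mult.assoc mult_nonneg_nonneg)
    then show ?thesis using fin unfolding A_def B_def by simp
  qed
  also have "pi * ((real mu + 1) / pi) * (fact j * fact (mu - j) / fact (j + (mu - j) + 1)) = 1 / real (mu choose j)"
  proof -
    have e: "j + (mu - j) + 1 = Suc mu" using assms by simp
    have b: "real (mu choose j) = fact mu / (fact j * fact (mu - j))"
      using binomial_fact[OF assms] by simp
    have fs: "(fact (Suc mu) :: real) = (real mu + 1) * fact mu" by (simp add: fact_Suc)
    have gen: "\<And>a b F m :: real. a > 0 \<Longrightarrow> b > 0 \<Longrightarrow> F > 0 \<Longrightarrow> m > 0 \<Longrightarrow>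
        pi * (m / pi) * (a * b / (m * F)) = 1 / (F / (a * b))"
      by (simp add: field_simps)
    show ?thesis unfolding e b fs by (rule gen) auto
  qed
  finally show ?thesis .
qed

lemma emeasure_iota0: "emeasure (iota 0) UNIV = 1"
proof -
  have "emeasure (iota 0) UNIV = (\<integral>\<^sup>+x. ennreal (iota_dens 0 x) \<partial>lborel)"
    unfolding iota_def by (subst emeasure_density) auto
  also have "\<dots> = (\<integral>\<^sup>+x. ennreal (iota_dens 0 x * (cmod x)^(2*0)) \<partial>lborel)" by simp
  also have "\<dots> = 1" using nn_moment[of 0 0] by simp
  finally show ?thesis .
qed

lemma finite_measure_iota0: "finite_measure (iota 0)"
  by (rule finite_measureI) (simp add: emeasure_iota0)

interpretation iota0: finite_measure "iota 0" by (rule finite_measure_iota0)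

lemma pow_le_onepow:
  fixes r :: real
  assumes "0 \<le> r" "n \<le> 2 * mu"
  shows "r^n \<le> (1 + r^2)^mu"
proof (cases "r \<le> 1")
  case True
  then have "r^n \<le> 1" using assms by (simp add: power_le_one)
  also have "1 \<le> (1 + r^2)^mu" by (simp add: one_le_power)
  finally show ?thesis .
next
  case False
  then have "r^n \<le> r^(2*mu)" using assms by (intro power_increasing) auto
  also have "\<dots> = (r^2)^mu" by (simp add: power_mult)
  also have "\<dots> \<le> (1 + r^2)^mu" by (intro power_mono) auto
  finally show ?thesis .
qed

lemma integrable_iota_bounded:
  fixes F :: "complex \<Rightarrow> complex"
  assumes [measurable]: "F \<in> borel_measurable borel"
    and bd: "\<And>x. cmod (F x) \<le> C * (1 + (cmod x)^2)^mu"
  shows "integrable (iota mu) F"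
proof -
  have "integrable (iota 0) (\<lambda>x. F x / complex_of_real (wt mu x))"
  proof (rule iota0.integrable_const_bound[where B=C])
    show "AE x in iota 0. norm (F x / complex_of_real (wt mu x)) \<le> C"
    proof (rule AE_I2)
      fix x
      have p: "0 < wt mu x" by (rule wt_pos)
      have "norm (F x / complex_of_real (wt mu x)) = cmod (F x) / wt mu x"
        using p by (simp add: norm_divide)
      also have "\<dots> \<le> C" using bd[of x] p by (simp add: divide_le_eq wt_def)
      finally show "norm (F x / complex_of_real (wt mu x)) \<le> C" .
    qed
  qed simp
  then show ?thesis by (subst integrable_iota_transfer) auto
qed

lemma integrable_moment:
  assumes "i + j \<le> 2 * mu"
  shows "integrable (iota mu) (\<lambda>x. x^i * cnj x ^ j)"
proof (rule integrable_iota_bounded[where C=1])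
  fix x :: complex
  have "cmod (x^i * cnj x ^ j) = (cmod x)^(i+j)" by (simp add: norm_mult norm_power power_add)
  also have "\<dots> \<le> 1 * (1 + (cmod x)^2)^mu" using pow_le_onepow[OF _ assms] by simp
  finally show "cmod (x^i * cnj x ^ j) \<le> 1 * (1 + (cmod x)^2)^mu" .
qed simp

lemma moment_diag:
  assumes "j \<le> mu"
  shows "integral\<^sup>L (iota mu) (\<lambda>x. x^j * cnj x ^ j) = 1 / of_nat (mu choose j)"
proof -
  have e: "x^j * cnj x ^ j = complex_of_real ((cmod x)^(2*j))" for x
    by (simp only: power_mult_distrib[symmetric] complex_norm_square[symmetric] of_real_power power_mult)
  have "integral\<^sup>L (iota mu) (\<lambda>x. (cmod x)^(2*j)) = enn2real (\<integral>\<^sup>+x. ennreal ((cmod x)^(2*j)) \<partial>iota mu)"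
    by (rule integral_eq_nn_integral) auto
  also have "(\<integral>\<^sup>+x. ennreal ((cmod x)^(2*j)) \<partial>iota mu) = (\<integral>\<^sup>+x. ennreal (iota_dens mu x * (cmod x)^(2*j)) \<partial>lborel)"
    unfolding iota_def by (subst nn_integral_density) (auto simp: ennreal_mult' iota_dens_nonneg)
  also have "\<dots> = ennreal (1 / real (mu choose j))" by (rule nn_moment[OF assms])
  finally have "integral\<^sup>L (iota mu) (\<lambda>x. (cmod x)^(2*j)) = 1 / real (mu choose j)" by simp
  moreover have "integral\<^sup>L (iota mu) (\<lambda>x. x^j * cnj x ^ j) = complex_of_real (integral\<^sup>L (iota mu) (\<lambda>x. (cmod x)^(2*j)))"
    by (simp only: e integral_complex_of_real)
  ultimately show ?thesis by simp
qed


lemma iota_dens_rot: "cmod u = 1 \<Longrightarrow> iota_dens mu (u * x) = iota_dens mu x"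
  unfolding iota_dens_def by (simp add: norm_mult)

lemma moment_offdiag:
  assumes "i \<noteq> j"
  shows "integral\<^sup>L (iota mu) (\<lambda>x. x^i * cnj x ^ j) = 0"
proof -
  define d where "d = real i - real j"
  have d0: "d \<noteq> 0" using assms unfolding d_def by simp
  have d1: "1 \<le> \<bar>d\<bar>" using assms unfolding d_def by linarith
  define th where "th = pi / (2 * d)"
  define u where "u = cis th"
  have u1: "cmod u = 1" unfolding u_def by simp
  have "\<bar>th\<bar> \<le> pi / 2"
  proof -
    have "\<bar>th\<bar> = pi / (2 * \<bar>d\<bar>)" unfolding th_def by (simp add: abs_divide abs_mult)
    also have "\<dots> \<le> pi / 2" using d1 by (simp add: divide_le_eq field_simps)
    finally show ?thesis .
  qed
  then have "0 \<le> cos th" by (intro cos_ge_zero) auto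
  then have um: "u \<noteq> -1" unfolding u_def by (auto simp: complex_eq_iff)
  have uij: "u^i * cnj u ^ j = \<i>"
  proof -
    have "u^i * cnj u ^ j = cis (real i * th) * cis (real j * (- th))"
      unfolding u_def by (simp add: Complex.DeMoivre cis_cnj)
    also have "\<dots> = cis (d * th)" unfolding d_def by (simp add: cis_mult algebra_simps)
    also have "d * th = pi / 2" unfolding th_def using d0 by simp
    finally show ?thesis by (simp add: cis.ctr complex_eq_iff)
  qed
  define H where "H x = iota_dens mu x *\<^sub>R (x^i * cnj x ^ j)" for x
  have [measurable]: "H \<in> borel_measurable borel" unfolding H_def by measurable
  have I: "integral\<^sup>L (iota mu) (\<lambda>x. x^i * cnj x ^ j) = integral\<^sup>L lborel H"
    unfolding iota_def H_def by (rule integral_density) (auto simp: iota_dens_nonneg)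
  have "integral\<^sup>L lborel H = integral\<^sup>L (distr lborel borel (\<lambda>x. u * x)) H"
    by (simp add: distr_rotation[OF u1 um])
  also have "\<dots> = integral\<^sup>L lborel (\<lambda>x. H (u * x))"
    by (rule integral_distr) auto
  also have "\<dots> = integral\<^sup>L lborel (\<lambda>x. \<i> * H x)"
  proof (rule Bochner_Integration.integral_cong[OF refl])
    fix x :: complex
    have "H (u * x) = iota_dens mu x *\<^sub>R ((u^i * cnj u ^ j) * (x^i * cnj x ^ j))"
      unfolding H_def iota_dens_rot[OF u1] by (simp add: power_mult_distrib ac_simps)
    then show "H (u * x) = \<i> * H x" unfolding uij H_def by (simp add: scaleR_conv_of_real ac_simps)
  qed
  also have "\<dots> = \<i> * integral\<^sup>L lborel H" by (rule integral_mult_right_zero)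
  finally have "integral\<^sup>L lborel H = \<i> * integral\<^sup>L lborel H" .
  then have "(1 - \<i>) * integral\<^sup>L lborel H = 0" by (simp add: algebra_simps)
  then have "integral\<^sup>L lborel H = 0" by (simp add: complex_eq_iff)
  then show ?thesis using I by simp
qed

lemma moment:
  assumes "i \<le> mu" "j \<le> mu"
  shows "integral\<^sup>L (iota mu) (\<lambda>x. x^i * cnj x ^ j) = (if i = j then 1 / of_nat (mu choose j) else 0)"
  using moment_diag[OF assms(2)] moment_offdiag[of i j mu] by auto


lemma poly_sum_mu:
  fixes q :: "complex poly"
  assumes "degree q \<le> mu"
  shows "poly q x = (\<Sum>l\<le>mu. coeff q l * x^l)"
proof -
  have "poly q x = (\<Sum>l\<le>degree q. coeff q l * x^l)" by (rule poly_altdef)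
  also have "\<dots> = (\<Sum>l\<le>mu. coeff q l * x^l)"
    using assms by (intro sum.mono_neutral_left) (auto simp: coeff_eq_0)
  finally show ?thesis .
qed

lemma binom_one_plus:
  fixes w :: complex
  shows "(1 + w)^mu = (\<Sum>i\<le>mu. of_nat (mu choose i) * w^i)"
  using binomial_ring[of w 1 mu] by (simp add: add.commute)

lemma reproducing:
  fixes q :: "complex poly"
  assumes "degree q \<le> mu"
  shows "integral\<^sup>L (iota mu) (\<lambda>x. poly q x * (1 + z * cnj x)^mu) = poly q z"
proof -
  have eq: "poly q x * (1 + z * cnj x)^mu
      = (\<Sum>l\<le>mu. \<Sum>i\<le>mu. (coeff q l * of_nat (mu choose i) * z^i) * (x^l * cnj x ^ i))" for x
    unfolding poly_sum_mu[OF assms, of x] binom_one_plus sum_product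
    by (intro sum.cong refl) (simp add: power_mult_distrib ac_simps)
  have int: "integrable (iota mu) (\<lambda>x. (coeff q l * of_nat (mu choose i) * z^i) * (x^l * cnj x ^ i))"
    if "l \<le> mu" "i \<le> mu" for l i
    using integrable_moment[of l i mu] that by simp
  have "integral\<^sup>L (iota mu) (\<lambda>x. poly q x * (1 + z * cnj x)^mu)
      = integral\<^sup>L (iota mu) (\<lambda>x. \<Sum>l\<le>mu. \<Sum>i\<le>mu. (coeff q l * of_nat (mu choose i) * z^i) * (x^l * cnj x ^ i))"
    by (simp only: eq)
  also have "\<dots> = (\<Sum>l\<le>mu. \<Sum>i\<le>mu. (coeff q l * of_nat (mu choose i) * z^i) * integral\<^sup>L (iota mu) (\<lambda>x. x^l * cnj x ^ i))"
  proof -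
    have "integral\<^sup>L (iota mu) (\<lambda>x. \<Sum>l\<le>mu. \<Sum>i\<le>mu. (coeff q l * of_nat (mu choose i) * z^i) * (x^l * cnj x ^ i))
        = (\<Sum>l\<le>mu. integral\<^sup>L (iota mu) (\<lambda>x. \<Sum>i\<le>mu. (coeff q l * of_nat (mu choose i) * z^i) * (x^l * cnj x ^ i)))"
      by (rule Bochner_Integration.integral_sum[where f="\<lambda>l x. \<Sum>i\<le>mu. (coeff q l * of_nat (mu choose i) * z^i) * (x^l * cnj x ^ i)"])
         (use int in \<open>auto intro!: integrable_sum\<close>)
    also have "\<dots> = (\<Sum>l\<le>mu. \<Sum>i\<le>mu. integral\<^sup>L (iota mu) (\<lambda>x. (coeff q l * of_nat (mu choose i) * z^i) * (x^l * cnj x ^ i)))"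
    proof (intro sum.cong refl)
      fix l assume "l \<in> {..mu}"
      then show "integral\<^sup>L (iota mu) (\<lambda>x. \<Sum>i\<le>mu. (coeff q l * of_nat (mu choose i) * z^i) * (x^l * cnj x ^ i))
        = (\<Sum>i\<le>mu. integral\<^sup>L (iota mu) (\<lambda>x. (coeff q l * of_nat (mu choose i) * z^i) * (x^l * cnj x ^ i)))"
        by (intro Bochner_Integration.integral_sum[where f="\<lambda>i x. (coeff q l * of_nat (mu choose i) * z^i) * (x^l * cnj x ^ i)"])
           (use int in auto)
    qed
    also have "\<dots> = (\<Sum>l\<le>mu. \<Sum>i\<le>mu. (coeff q l * of_nat (mu choose i) * z^i) * integral\<^sup>L (iota mu) (\<lambda>x. x^l * cnj x ^ i))"
      by (intro sum.cong refl integral_mult_right_zero)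
    finally show ?thesis .
  qed
  also have "\<dots> = (\<Sum>l\<le>mu. \<Sum>i\<le>mu. (coeff q l * of_nat (mu choose i) * z^i) * (if l = i then 1 / of_nat (mu choose i) else 0))"
    by (intro sum.cong refl) (simp add: moment)
  also have "\<dots> = (\<Sum>l\<le>mu. coeff q l * z^l)"
  proof (intro sum.cong refl)
    fix l assume l: "l \<in> {..mu}"
    have nz: "(of_nat (mu choose l) :: complex) \<noteq> 0" using l by simp
    have "(\<Sum>i\<le>mu. (coeff q l * of_nat (mu choose i) * z^i) * (if l = i then 1 / of_nat (mu choose i) else 0))
        = (coeff q l * of_nat (mu choose l) * z^l) * (1 / of_nat (mu choose l))"
      using l by (simp add: if_distrib sum.delta cong: if_cong)
    also have "\<dots> = coeff q l * z^l" using nz by (simp add: field_simps)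
    finally show "(\<Sum>i\<le>mu. (coeff q l * of_nat (mu choose i) * z^i) * (if l = i then 1 / of_nat (mu choose i) else 0))
        = coeff q l * z^l" .
  qed
  also have "\<dots> = poly q z" by (simp add: poly_sum_mu[OF assms])
  finally show ?thesis .
qed


interpretation iota00: pair_sigma_finite "iota 0" "iota 0"
  by (simp add: pair_sigma_finite_def iota0.sigma_finite_measure_axioms)

lemma L2_integrable:
  assumes "L2_iota f"
  shows "integrable (iota 0) f"
proof -
  have mf[measurable]: "f \<in> borel_measurable borel" using assms unfolding L2_iota_def by simp
  have i2: "integrable (iota 0) (\<lambda>z. (cmod (f z))\<^sup>2)" using assms unfolding L2_iota_def by simp
  show ?thesis
  proof (rule Bochner_Integration.integrable_bound[where f="\<lambda>z. 1 + (cmod (f z))\<^sup>2"])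
    show "integrable (iota 0) (\<lambda>z. 1 + (cmod (f z))\<^sup>2)" using i2 by simp
    show "AE x in iota 0. norm (f x) \<le> norm (1 + (cmod (f x))\<^sup>2)"
    proof (rule AE_I2)
      fix x
      have "cmod (f x) \<le> 1 + (cmod (f x))\<^sup>2"
      proof -
        have "0 \<le> (cmod (f x) - 1)\<^sup>2" by simp
        then have "2 * cmod (f x) \<le> 1 + (cmod (f x))\<^sup>2" by (simp add: power2_diff)
        then show ?thesis using norm_ge_zero[of "f x"] by linarith
      qed
      then show "norm (f x) \<le> norm (1 + (cmod (f x))\<^sup>2)" by simp
    qed
  qed simp
qed

lemma poly_bound:
  fixes q :: "complex poly"
  assumes "degree q \<le> mu"
  shows "cmod (poly q y) \<le> (\<Sum>l\<le>mu. cmod (coeff q l)) * (1 + cmod y)^mu"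
proof -
  have "cmod (poly q y) = cmod (\<Sum>l\<le>mu. coeff q l * y^l)" by (simp add: poly_sum_mu[OF assms])
  also have "\<dots> \<le> (\<Sum>l\<le>mu. cmod (coeff q l * y^l))" by (rule norm_sum)
  also have "\<dots> \<le> (\<Sum>l\<le>mu. cmod (coeff q l) * (1 + cmod y)^mu)"
  proof (intro sum_mono)
    fix l assume "l \<in> {..mu}"
    then have l: "l \<le> mu" by simp
    have "(cmod y)^l \<le> (1 + cmod y)^l" by (intro power_mono) auto
    also have "\<dots> \<le> (1 + cmod y)^mu" using l by (intro power_increasing) auto
    finally have "(cmod y)^l \<le> (1 + cmod y)^mu" .
    then show "cmod (coeff q l * y^l) \<le> cmod (coeff q l) * (1 + cmod y)^mu"
      by (simp add: norm_mult norm_power mult_left_mono)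
  qed
  also have "\<dots> = (\<Sum>l\<le>mu. cmod (coeff q l)) * (1 + cmod y)^mu" by (simp add: sum_distrib_right)
  finally show ?thesis .
qed

lemma sq_bound: "((1 + cmod y)^mu)^2 \<le> 2^mu * wt mu y"
proof -
  have "(1 + cmod y)^2 \<le> 2 * (1 + (cmod y)^2)"
  proof -
    have "0 \<le> (cmod y - 1)\<^sup>2" by simp
    then show ?thesis by (simp add: power2_diff power2_sum)
  qed
  then have "((1 + cmod y)^2)^mu \<le> (2 * (1 + (cmod y)^2))^mu" by (intro power_mono) auto
  moreover have "(2 * (1 + (cmod y)^2))^mu = 2^mu * wt mu y" unfolding wt_def by (rule power_mult_distrib)
  moreover have "((1 + cmod y)^mu)^2 = ((1 + cmod y)^2)^mu" by (simp add: power_mult[symmetric] mult.commute)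
  ultimately show ?thesis by simp
qed

lemma poly_measurable[measurable (raw)]:
  fixes q :: "complex poly"
  assumes "g \<in> borel_measurable M"
  shows "(\<lambda>x. poly q (g x)) \<in> borel_measurable M"
proof -
  have "poly q \<in> borel_measurable borel"
  proof (rule borel_measurable_continuous_onI)
    have e: "poly q = (\<lambda>x. \<Sum>i\<le>degree q. coeff q i * x ^ i)" by (rule ext) (rule poly_altdef)
    show "continuous_on UNIV (poly q)" unfolding e by (intro continuous_intros)
  qed
  then show ?thesis using assms by (rule measurable_compose[rotated])
qed

lemma Phi_bound:
  fixes q :: "complex poly"
  assumes "degree q \<le> mu"
  shows "cmod (poly q z * (1 + x * cnj z)^mu * cnj (poly q x))
      \<le> ((\<Sum>l\<le>mu. cmod (coeff q l))^2 * 4^mu) * (wt mu z * wt mu x)"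
proof -
  define Cq where "Cq = (\<Sum>l\<le>mu. cmod (coeff q l))"
  have Cq0: "0 \<le> Cq" unfolding Cq_def by (simp add: sum_nonneg)
  define Az where "Az = (1 + cmod z)^mu"
  define Ax where "Ax = (1 + cmod x)^mu"
  have Az0: "0 \<le> Az" "0 \<le> Ax" unfolding Az_def Ax_def by simp_all
  have b1: "cmod (poly q z) \<le> Cq * Az" unfolding Cq_def Az_def by (rule poly_bound[OF assms])
  have b3: "cmod (cnj (poly q x)) \<le> Cq * Ax" unfolding Cq_def Ax_def using poly_bound[OF assms, of x] by simp
  have "cmod (1 + x * cnj z) \<le> 1 + cmod x * cmod z"
    using norm_triangle_ineq[of 1 "x * cnj z"] by (simp add: norm_mult)
  also have "\<dots> \<le> (1 + cmod x) * (1 + cmod z)" by (simp add: algebra_simps)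
  finally have "cmod (1 + x * cnj z) \<le> (1 + cmod x) * (1 + cmod z)" .
  then have b2: "cmod ((1 + x * cnj z)^mu) \<le> Ax * Az"
    unfolding Ax_def Az_def norm_power power_mult_distrib[symmetric] by (intro power_mono) auto
  have "cmod (poly q z * (1 + x * cnj z)^mu * cnj (poly q x))
      = cmod (poly q z) * cmod ((1 + x * cnj z)^mu) * cmod (cnj (poly q x))" by (simp add: norm_mult)
  also have "\<dots> \<le> (Cq * Az) * (Ax * Az) * (Cq * Ax)"
    using b1 b2 b3 Cq0 Az0 by (intro mult_mono) (auto intro: mult_nonneg_nonneg)
  also have "\<dots> = Cq^2 * (Az^2 * Ax^2)" by (simp add: power2_eq_square ac_simps)
  also have "\<dots> \<le> Cq^2 * ((2^mu * wt mu z) * (2^mu * wt mu x))"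
    unfolding Az_def Ax_def using Cq0
    by (intro mult_left_mono mult_mono sq_bound) (auto simp: wt_def)
  also have "\<dots> = (Cq^2 * 4^mu) * (wt mu z * wt mu x)"
  proof -
    have "(2::real)^mu * 2^mu = 4^mu" by (simp add: power_mult_distrib[symmetric])
    then show ?thesis by (simp add: ac_simps)
  qed
  finally show ?thesis unfolding Cq_def .
qed


definition Aq :: "complex \<Rightarrow> complex \<Rightarrow> real" where "Aq z s = (cmod (1 + cnj z * s))^2"
definition Dq :: "complex \<Rightarrow> complex \<Rightarrow> real" where "Dq z s = (cmod (s - z))^2"
definition Bq :: "complex \<Rightarrow> complex \<Rightarrow> real" where "Bq z s = (1 + (cmod z)^2) * (1 + (cmod s)^2)"

lemma lagrange: "Aq z s + Dq z s = Bq z s"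
  unfolding Aq_def Dq_def Bq_def cmod_power2
  by (simp add: power2_eq_square algebra_simps)

lemma Aq_nonneg: "0 \<le> Aq z s" unfolding Aq_def by simp
lemma Dq_nonneg: "0 \<le> Dq z s" unfolding Dq_def by simp
lemma Bq_pos: "0 < Bq z s" unfolding Bq_def using onepos[of z] onepos[of s] by simp

lemma wt_Bq: "wt mu z * wt mu s = (Bq z s)^mu"
  unfolding wt_def Bq_def by (simp add: power_mult_distrib)

definition Gj :: "nat \<Rightarrow> nat \<Rightarrow> complex \<Rightarrow> complex \<Rightarrow> real" where
  "Gj mu j z s = real (mu choose j) * (Dq z s)^j * (Aq z s)^(mu - j) / (Bq z s)^mu"

lemma Gj_nonneg: "0 \<le> Gj mu j z s"
  unfolding Gj_def using Aq_nonneg Dq_nonneg Bq_pos by (simp add: less_imp_le)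

lemma sum_Gj: "(\<Sum>j\<le>mu. Gj mu j z s) = 1"
proof -
  have "(\<Sum>j\<le>mu. Gj mu j z s) = (\<Sum>j\<le>mu. real (mu choose j) * (Dq z s)^j * (Aq z s)^(mu - j)) / (Bq z s)^mu"
    unfolding Gj_def by (simp add: sum_divide_distrib)
  also have "(\<Sum>j\<le>mu. real (mu choose j) * (Dq z s)^j * (Aq z s)^(mu - j)) = (Dq z s + Aq z s)^mu"
    by (rule binomial_ring[symmetric])
  also have "Dq z s + Aq z s = Bq z s" using lagrange[of z s] by simp
  finally show ?thesis using Bq_pos[of z s] by simp
qed

lemma Gj_le1: "j \<le> mu \<Longrightarrow> Gj mu j z s \<le> 1"
proof -
  assume j: "j \<le> mu"
  have "Gj mu j z s \<le> (\<Sum>i\<le>mu. Gj mu i z s)"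
    using j by (intro member_le_sum) (auto simp: Gj_nonneg)
  then show ?thesis by (simp add: sum_Gj)
qed

definition Kb :: "nat \<Rightarrow> complex \<Rightarrow> complex \<Rightarrow> real" where
  "Kb tau z s = (cmod (1 + z * cnj s)) ^ (2 * tau) / ((1 + (cmod z)\<^sup>2) ^ tau * (1 + (cmod s)\<^sup>2) ^ tau)"

lemma Kb_eq: "Kb tau z s = (Aq z s / Bq z s)^tau"
proof -
  have c: "cnj (1 + z * cnj s) = 1 + cnj z * s" by simp
  have "cmod (1 + z * cnj s) = cmod (cnj (1 + z * cnj s))" by (rule complex_mod_cnj[symmetric])
  then have "cmod (1 + z * cnj s) = cmod (1 + cnj z * s)" unfolding c .
  then show ?thesis unfolding Kb_def Aq_def Bq_def
    by (simp add: power_mult power_divide power_mult_distrib)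
qed

lemma Kb_bound: "0 \<le> Kb tau z s \<and> Kb tau z s \<le> 1"
proof -
  have "Aq z s \<le> Bq z s" using lagrange[of z s] Dq_nonneg[of z s] by linarith
  then have "Aq z s / Bq z s \<le> 1" using Bq_pos[of z s] by simp
  moreover have "0 \<le> Aq z s / Bq z s" using Aq_nonneg[of z s] Bq_pos[of z s] by simp
  ultimately show ?thesis unfolding Kb_eq by (simp add: power_le_one)
qed

lemma E_identity:
  assumes "k \<le> mu"
  shows "real (mu choose k) * (\<Sum>l\<le>k. (-1)^(k - l) * real (k choose l) * Kb (mu - l) z s) = Gj mu k z s"
proof -
  define A where "A = Aq z s"
  define B where "B = Bq z s"
  have B0: "0 < B" unfolding B_def by (rule Bq_pos)
  have t: "(-1)^(k - l) * real (k choose l) * (A / B)^(mu - l)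
      = A^(mu - k) / B^mu * (real (k choose l) * B^l * (- A)^(k - l))" if l: "l \<le> k" for l
  proof -
    have e1: "mu - l = (mu - k) + (k - l)" using l assms by simp
    have e2: "mu = (mu - l) + l" using l assms by simp
    have "(A / B)^(mu - l) = A^(mu - l) / B^(mu - l)" by (simp add: power_divide)
    also have "\<dots> = A^(mu - k) * A^(k - l) * B^l / B^mu"
    proof -
      have pA: "A^(mu - l) = A^(mu - k) * A^(k - l)" unfolding e1 by (rule power_add)
      have pB: "B^mu = B^(mu - l) * B^l" by (subst e2) (simp only: power_add)
      have "B^l > 0" using B0 by simp
      then show ?thesis unfolding pA pB using B0 by simp
    qed
    finally have "(A / B)^(mu - l) = A^(mu - k) * A^(k - l) * B^l / B^mu" .
    moreover have "(- A)^(k - l) = (-1)^(k - l) * A^(k - l)" by (rule power_minus)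
    ultimately show ?thesis by (simp add: field_simps)
  qed
  have "(\<Sum>l\<le>k. (-1)^(k - l) * real (k choose l) * Kb (mu - l) z s)
      = (\<Sum>l\<le>k. A^(mu - k) / B^mu * (real (k choose l) * B^l * (- A)^(k - l)))"
  proof (intro sum.cong refl)
    fix l assume "l \<in> {..k}"
    then have l: "l \<le> k" by simp
    have kb: "Kb (mu - l) z s = (A / B)^(mu - l)" unfolding A_def B_def by (rule Kb_eq)
    show "(-1)^(k - l) * real (k choose l) * Kb (mu - l) z s
        = A^(mu - k) / B^mu * (real (k choose l) * B^l * (- A)^(k - l))"
      unfolding kb by (rule t[OF l])
  qed
  also have "\<dots> = A^(mu - k) / B^mu * (\<Sum>l\<le>k. real (k choose l) * B^l * (- A)^(k - l))"
    by (rule sum_distrib_left[symmetric])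
  also have "(\<Sum>l\<le>k. real (k choose l) * B^l * (- A)^(k - l)) = (B + - A)^k"
    by (rule binomial_ring[symmetric])
  also have "B + - A = Dq z s" unfolding A_def B_def using lagrange[of z s] by simp
  finally have "(\<Sum>l\<le>k. (-1)^(k - l) * real (k choose l) * Kb (mu - l) z s) = A^(mu - k) / B^mu * (Dq z s)^k" .
  then show ?thesis unfolding Gj_def A_def B_def by simp
qed


lemma of_nat_plus1_nz: "(of_nat mu + 1 :: complex) \<noteq> 0"
proof -
  have "(of_nat mu + 1 :: complex) = of_nat (Suc mu)" by simp
  then show ?thesis by (simp only: of_nat_eq_0_iff)
qed

lemma key:
  fixes f :: "complex \<Rightarrow> complex" and q :: "complex poly"
  assumes L2: "L2_iota f" and dq: "degree q \<le> mu"
  shows "inner_H mu (Rstar mu f (poly q)) (poly q)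
       = integral\<^sup>L (iota 0) (\<lambda>s. f s * (poly q s * cnj (poly q s)) / complex_of_real (wt mu s))"
proof -
  have mf[measurable]: "f \<in> borel_measurable borel" using L2 unfolding L2_iota_def by simp
  have fint: "integrable (iota 0) f" by (rule L2_integrable[OF L2])
  define C where "C = (\<Sum>l\<le>mu. cmod (coeff q l))^2 * 4^mu"
  have C0: "0 \<le> C" unfolding C_def by simp
  define Phi where "Phi x z = f z * (poly q z * (1 + x * cnj z)^mu * cnj (poly q x)) / complex_of_real (wt mu z * wt mu x)" for x z
  have Phi_meas[measurable]: "case_prod Phi \<in> borel_measurable (iota 0 \<Otimes>\<^sub>M iota 0)"
    unfolding Phi_def by measurable
  have Phi_bd: "cmod (Phi x z) \<le> C * cmod (f z)" for x z
  proof -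
    have wp: "0 < wt mu z * wt mu x" using wt_pos[of mu z] wt_pos[of mu x] by simp
    have "cmod (Phi x z) = cmod (f z) * (cmod (poly q z * (1 + x * cnj z)^mu * cnj (poly q x)) / (wt mu z * wt mu x))"
      unfolding Phi_def using wp by (simp add: norm_mult norm_divide abs_of_pos[OF wt_pos])
    also have "\<dots> \<le> cmod (f z) * C"
    proof (intro mult_left_mono)
      show "cmod (poly q z * (1 + x * cnj z)^mu * cnj (poly q x)) / (wt mu z * wt mu x) \<le> C"
        using Phi_bound[OF dq, of z x] wp unfolding C_def by (simp add: divide_le_eq)
    qed simp
    finally show ?thesis by (simp add: mult.commute)
  qed
  have Phi_int: "integrable (iota 0 \<Otimes>\<^sub>M iota 0) (case_prod Phi)"
  proof (rule Bochner_Integration.integrable_bound[where f="\<lambda>p. C * cmod (f (snd p))"])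
    show "integrable (iota 0 \<Otimes>\<^sub>M iota 0) (\<lambda>p. C * cmod (f (snd p)))"
    proof (rule iota00.Fubini_integrable)
      show "(\<lambda>p. C * cmod (f (snd p))) \<in> borel_measurable (iota 0 \<Otimes>\<^sub>M iota 0)" by measurable
      show "integrable (iota 0) (\<lambda>x. \<integral>y. norm (C * cmod (f (snd (x, y)))) \<partial>iota 0)" by simp
      show "AE x in iota 0. integrable (iota 0) (\<lambda>y. C * cmod (f (snd (x, y))))"
        using fint by (auto intro!: integrable_norm)
    qed
    show "AE p in iota 0 \<Otimes>\<^sub>M iota 0. norm (case_prod Phi p) \<le> norm (C * cmod (f (snd p)))"
      using Phi_bd C0 by (auto simp: abs_mult)
  qed simp
  have R: "Rstar mu f (poly q) x = integral\<^sup>L (iota 0) (\<lambda>z. f z * poly q z * (1 + x * cnj z)^mu / complex_of_real (wt mu z))" for x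
    unfolding Rstar_def using of_nat_plus1_nz[of mu]
    by (subst integral_iota_transfer) simp_all
  have RM[measurable]: "(\<lambda>x. integral\<^sup>L (iota 0) (\<lambda>z. f z * poly q z * (1 + x * cnj z)^mu / complex_of_real (wt mu z)))
      \<in> borel_measurable borel"
    by (rule iota0.borel_measurable_lebesgue_integral) measurable
  have "inner_H mu (Rstar mu f (poly q)) (poly q) = integral\<^sup>L (iota mu) (\<lambda>x. Rstar mu f (poly q) x * cnj (poly q x))"
    unfolding inner_H_def ..
  also have "\<dots> = (real mu + 1) * integral\<^sup>L (iota 0) (\<lambda>x. Rstar mu f (poly q) x * cnj (poly q x) / complex_of_real (wt mu x))"
    unfolding R by (rule integral_iota_transfer) measurable
  also have "integral\<^sup>L (iota 0) (\<lambda>x. Rstar mu f (poly q) x * cnj (poly q x) / complex_of_real (wt mu x))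
      = integral\<^sup>L (iota 0) (\<lambda>x. integral\<^sup>L (iota 0) (\<lambda>z. Phi x z))"
  proof (rule Bochner_Integration.integral_cong[OF refl])
    fix x
    have "Rstar mu f (poly q) x * cnj (poly q x) / complex_of_real (wt mu x)
        = integral\<^sup>L (iota 0) (\<lambda>z. f z * poly q z * (1 + x * cnj z)^mu / complex_of_real (wt mu z)) * (cnj (poly q x) / complex_of_real (wt mu x))"
      unfolding R by simp
    also have "\<dots> = integral\<^sup>L (iota 0) (\<lambda>z. f z * poly q z * (1 + x * cnj z)^mu / complex_of_real (wt mu z) * (cnj (poly q x) / complex_of_real (wt mu x)))"
      by (rule integral_mult_left_zero[symmetric])
    also have "\<dots> = integral\<^sup>L (iota 0) (\<lambda>z. Phi x z)"
      unfolding Phi_def by (intro Bochner_Integration.integral_cong refl) (simp add: field_simps)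
    finally show "Rstar mu f (poly q) x * cnj (poly q x) / complex_of_real (wt mu x) = integral\<^sup>L (iota 0) (\<lambda>z. Phi x z)" .
  qed
  also have "\<dots> = integral\<^sup>L (iota 0) (\<lambda>z. integral\<^sup>L (iota 0) (\<lambda>x. Phi x z))"
    by (rule iota00.Fubini_integral[symmetric, OF Phi_int])
  also have "\<dots> = integral\<^sup>L (iota 0) (\<lambda>z. f z * poly q z / complex_of_real (wt mu z) * (cnj (poly q z) / (of_nat mu + 1)))"
  proof (rule Bochner_Integration.integral_cong[OF refl])
    fix z
    have "integral\<^sup>L (iota 0) (\<lambda>x. Phi x z)
        = integral\<^sup>L (iota 0) (\<lambda>x. f z * poly q z / complex_of_real (wt mu z) * ((1 + x * cnj z)^mu * cnj (poly q x) / complex_of_real (wt mu x)))"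
      unfolding Phi_def by (intro Bochner_Integration.integral_cong refl) (simp add: field_simps)
    also have "\<dots> = f z * poly q z / complex_of_real (wt mu z) * integral\<^sup>L (iota 0) (\<lambda>x. (1 + x * cnj z)^mu * cnj (poly q x) / complex_of_real (wt mu x))"
      by (rule integral_mult_right_zero)
    also have "integral\<^sup>L (iota 0) (\<lambda>x. (1 + x * cnj z)^mu * cnj (poly q x) / complex_of_real (wt mu x)) = cnj (poly q z) / (of_nat mu + 1)"
    proof -
      have "integral\<^sup>L (iota mu) (\<lambda>x. (1 + x * cnj z)^mu * cnj (poly q x))
          = (real mu + 1) * integral\<^sup>L (iota 0) (\<lambda>x. (1 + x * cnj z)^mu * cnj (poly q x) / complex_of_real (wt mu x))"
        by (rule integral_iota_transfer) measurable
      moreover have "integral\<^sup>L (iota mu) (\<lambda>x. (1 + x * cnj z)^mu * cnj (poly q x)) = cnj (poly q z)"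
      proof -
        have "integral\<^sup>L (iota mu) (\<lambda>x. (1 + x * cnj z)^mu * cnj (poly q x))
            = integral\<^sup>L (iota mu) (\<lambda>x. cnj (poly q x * (1 + z * cnj x)^mu))"
          by (intro Bochner_Integration.integral_cong refl) (simp add: mult.commute)
        also have "\<dots> = cnj (integral\<^sup>L (iota mu) (\<lambda>x. poly q x * (1 + z * cnj x)^mu))"
          by (rule Bochner_Integration.integral_cnj)
        also have "\<dots> = cnj (poly q z)" by (simp add: reproducing[OF dq])
        finally show ?thesis .
      qed
      ultimately show ?thesis using of_nat_plus1_nz[of mu] by (simp add: field_simps)
    qed
    finally show "integral\<^sup>L (iota 0) (\<lambda>x. Phi x z) = f z * poly q z / complex_of_real (wt mu z) * (cnj (poly q z) / (of_nat mu + 1))" .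
  qed
  finally have "inner_H mu (Rstar mu f (poly q)) (poly q)
      = (of_nat mu + 1) * integral\<^sup>L (iota 0) (\<lambda>z. (f z * (poly q z * cnj (poly q z)) / complex_of_real (wt mu z)) * (1 / (of_nat mu + 1)))"
    by (simp add: field_simps)
  also have "\<dots> = integral\<^sup>L (iota 0) (\<lambda>s. f s * (poly q s * cnj (poly q s)) / complex_of_real (wt mu s))"
    using of_nat_plus1_nz[of mu] by (simp only: integral_mult_left_zero) simp
  finally show ?thesis .
qed


lemma int_fb:
  fixes f b :: "complex \<Rightarrow> complex"
  assumes fi: "integrable (iota 0) f" and [measurable]: "b \<in> borel_measurable borel"
    and bd: "\<And>s. cmod (b s) \<le> M"
  shows "integrable (iota 0) (\<lambda>s. f s * b s)"
proof (rule Bochner_Integration.integrable_bound[where f="\<lambda>s. M * cmod (f s)"])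
  show "integrable (iota 0) (\<lambda>s. M * cmod (f s))" using fi by (auto intro!: integrable_norm)
  have mf: "f \<in> borel_measurable (iota 0)" using fi by (rule borel_measurable_integrable)
  then show "(\<lambda>s. f s * b s) \<in> borel_measurable (iota 0)" by measurable
  show "AE s in iota 0. norm (f s * b s) \<le> norm (M * cmod (f s))"
  proof (rule AE_I2)
    fix s
    have M0: "0 \<le> M" using bd[of s] norm_ge_zero[of "b s"] by linarith
    have "norm (f s * b s) \<le> cmod (f s) * M" using bd[of s] by (simp add: norm_mult mult_left_mono)
    then show "norm (f s * b s) \<le> norm (M * cmod (f s))" using M0 by (simp add: abs_mult mult.commute)
  qed
qed

definition gp :: "nat \<Rightarrow> complex \<Rightarrow> nat \<Rightarrow> complex poly" where
  "gp mu z j = smult (complex_of_real (sqrt (real (mu choose j) / wt mu z))) ([:-z, 1:]^j * [:1, cnj z:]^(mu - j))"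

lemma degree_gp: "j \<le> mu \<Longrightarrow> degree (gp mu z j) \<le> mu"
proof -
  assume j: "j \<le> mu"
  have d1: "degree ([:-z, 1:]^j) \<le> j"
    using degree_power_le[of "[:-z, 1:]" j] by simp
  have d2: "degree ([:1, cnj z:]^(mu - j)) \<le> mu - j"
    using degree_power_le[of "[:1, cnj z:]" "mu - j"] by (simp add: degree_pCons_le order_trans)
  have "degree (gp mu z j) \<le> degree ([:-z, 1:]^j * [:1, cnj z:]^(mu - j))"
    unfolding gp_def by (rule degree_smult_le)
  also have "\<dots> \<le> degree ([:-z, 1:]^j) + degree ([:1, cnj z:]^(mu - j))" by (rule degree_mult_le)
  also have "\<dots> \<le> mu" using d1 d2 j by linarith
  finally show ?thesis .
qed

lemma poly_gp: "poly (gp mu z j) s = complex_of_real (sqrt (real (mu choose j) / wt mu z)) * ((s - z)^j * (1 + cnj z * s)^(mu - j))"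
  unfolding gp_def by (simp add: algebra_simps)

lemma gp_sq:
  "poly (gp mu z j) s * cnj (poly (gp mu z j) s) / complex_of_real (wt mu s) = complex_of_real (Gj mu j z s)"
proof -
  define c where "c = sqrt (real (mu choose j) / wt mu z)"
  define w where "w = (s - z)^j * (1 + cnj z * s)^(mu - j)"
  have c2: "c^2 = real (mu choose j) / wt mu z" unfolding c_def using wt_pos[of mu z] by simp
  have "poly (gp mu z j) s * cnj (poly (gp mu z j) s) = complex_of_real ((cmod (poly (gp mu z j) s))^2)"
    by (rule complex_norm_square[symmetric])
  also have "(cmod (poly (gp mu z j) s))^2 = c^2 * ((cmod w)^2)"
    unfolding poly_gp c_def[symmetric] w_def[symmetric] by (simp add: norm_mult power_mult_distrib)
  also have "(cmod w)^2 = (Dq z s)^j * (Aq z s)^(mu - j)"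
    unfolding w_def Dq_def Aq_def by (simp add: norm_mult norm_power power_mult_distrib power_mult[symmetric] mult.commute)
  finally have "poly (gp mu z j) s * cnj (poly (gp mu z j) s)
      = complex_of_real (real (mu choose j) / wt mu z * ((Dq z s)^j * (Aq z s)^(mu - j)))"
    unfolding c2 .
  then have "poly (gp mu z j) s * cnj (poly (gp mu z j) s) / complex_of_real (wt mu s)
      = complex_of_real (real (mu choose j) / wt mu z * ((Dq z s)^j * (Aq z s)^(mu - j)) / wt mu s)"
    by simp
  also have "real (mu choose j) / wt mu z * ((Dq z s)^j * (Aq z s)^(mu - j)) / wt mu s = Gj mu j z s"
    unfolding Gj_def wt_Bq[symmetric] by (simp add: field_simps)
  finally show ?thesis .
qed

lemma Aq_meas[measurable]: "Aq z \<in> borel_measurable borel" unfolding Aq_def by measurable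
lemma Dq_meas[measurable]: "Dq z \<in> borel_measurable borel" unfolding Dq_def by measurable
lemma Bq_meas[measurable]: "Bq z \<in> borel_measurable borel" unfolding Bq_def by measurable
lemma Gj_meas[measurable]: "Gj mu j z \<in> borel_measurable borel" unfolding Gj_def by measurable
lemma Kb_meas[measurable]: "Kb tau z \<in> borel_measurable borel" unfolding Kb_def by measurable

lemma inner_gp:
  assumes L2: "L2_iota f" and j: "j \<le> mu"
  shows "inner_H mu (Rstar mu f (poly (gp mu z j))) (poly (gp mu z j))
      = integral\<^sup>L (iota 0) (\<lambda>s. f s * complex_of_real (Gj mu j z s))"
  unfolding key[OF L2 degree_gp[OF j]]
proof (rule Bochner_Integration.integral_cong[OF refl])
  fix s
  show "f s * (poly (gp mu z j) s * cnj (poly (gp mu z j) s)) / complex_of_real (wt mu s) = f s * complex_of_real (Gj mu j z s)"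
    using gp_sq[of mu z j s] by (simp add: mult.assoc times_divide_eq_right[symmetric] del: times_divide_eq_right)
qed

lemma E_op_eq:
  assumes L2: "L2_iota f" and k: "k \<le> mu"
  shows "E_op mu k f z = integral\<^sup>L (iota 0) (\<lambda>s. f s * complex_of_real (Gj mu k z s))"
proof -
  have fi: "integrable (iota 0) f" by (rule L2_integrable[OF L2])
  have mf[measurable]: "f \<in> borel_measurable borel" using L2 unfolding L2_iota_def by simp
  have b: "berezin tau f z = integral\<^sup>L (iota 0) (\<lambda>s. f s * complex_of_real (Kb tau z s))" for tau
    unfolding berezin_def Kb_def by (simp add: mult.commute)
  have bi: "integrable (iota 0) (\<lambda>s. f s * complex_of_real (Kb tau z s))" for tau
    by (rule int_fb[OF fi, where M=1]) (use Kb_bound[of tau z] in \<open>auto simp: abs_le_iff\<close>)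
  have "E_op mu k f z = (\<Sum>l\<in>{0..k}. integral\<^sup>L (iota 0) (\<lambda>s. (of_nat (mu choose k) * ((-1) ^ (k - l) * of_nat (k choose l))) * (f s * complex_of_real (Kb (mu - l) z s))))"
    unfolding E_op_def b sum_distrib_left by (intro sum.cong refl) (simp add: mult.assoc)
  also have "\<dots> = integral\<^sup>L (iota 0) (\<lambda>s. \<Sum>l\<in>{0..k}. (of_nat (mu choose k) * ((-1) ^ (k - l) * of_nat (k choose l))) * (f s * complex_of_real (Kb (mu - l) z s)))"
    by (rule Bochner_Integration.integral_sum[symmetric]) (use bi in auto)
  also have "\<dots> = integral\<^sup>L (iota 0) (\<lambda>s. f s * complex_of_real (Gj mu k z s))"
  proof (rule Bochner_Integration.integral_cong[OF refl])
    fix s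
    have "complex_of_real (Gj mu k z s) = complex_of_real (real (mu choose k) * (\<Sum>l\<le>k. (-1)^(k - l) * real (k choose l) * Kb (mu - l) z s))"
      using E_identity[OF k, of z s] by simp
    also have "\<dots> = (\<Sum>l\<in>{0..k}. of_nat (mu choose k) * ((-1) ^ (k - l) * of_nat (k choose l)) * complex_of_real (Kb (mu - l) z s))"
      by (simp add: atLeast0AtMost sum_distrib_left mult.assoc)
    finally show "(\<Sum>l\<in>{0..k}. (of_nat (mu choose k) * ((-1) ^ (k - l) * of_nat (k choose l))) * (f s * complex_of_real (Kb (mu - l) z s)))
        = f s * complex_of_real (Gj mu k z s)"
      by (simp add: sum_distrib_left ac_simps)
  qed
  finally show ?thesis .
qed


lemma int_mu_fmon:
  assumes L2: "L2_iota f" and "i \<le> mu" "j \<le> mu"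
  shows "integrable (iota mu) (\<lambda>z. f z * z^j * cnj z ^ i)"
proof -
  have fi: "integrable (iota 0) f" by (rule L2_integrable[OF L2])
  have mf[measurable]: "f \<in> borel_measurable borel" using L2 unfolding L2_iota_def by simp
  have "integrable (iota 0) (\<lambda>z. f z * (z^j * cnj z ^ i / complex_of_real (wt mu z)))"
  proof (rule int_fb[OF fi, where M=1])
    show "(\<lambda>z. z^j * cnj z ^ i / complex_of_real (wt mu z)) \<in> borel_measurable borel" by measurable
    fix s :: complex
    have p: "0 < wt mu s" by (rule wt_pos)
    have "cmod (s^j * cnj s ^ i) \<le> wt mu s"
      using pow_le_onepow[of "cmod s" "j + i" mu] assms(2,3) by (simp add: norm_mult norm_power power_add wt_def)
    then show "cmod (s^j * cnj s ^ i / complex_of_real (wt mu s)) \<le> 1"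
      using p by (simp add: norm_divide divide_le_eq)
  qed
  then have "integrable (iota 0) (\<lambda>z. f z * z^j * cnj z ^ i / complex_of_real (wt mu z))"
    by (simp add: mult.assoc)
  then show ?thesis by (subst integrable_iota_transfer) auto
qed

lemma Rstar_monomial:
  assumes L2: "L2_iota f" and j: "j \<le> mu"
  shows "Rstar mu f (\<lambda>x. x^j) = poly (\<Sum>i\<le>mu. monom (of_nat (mu choose i) / (of_nat mu + 1) * integral\<^sup>L (iota mu) (\<lambda>z. f z * z^j * cnj z ^ i)) i)"
proof
  fix x :: complex
  have eq: "f z * z^j * (1 + x * cnj z)^mu = (\<Sum>i\<le>mu. (of_nat (mu choose i) * x^i) * (f z * z^j * cnj z ^ i))" for z
    unfolding binom_one_plus sum_distrib_left by (intro sum.cong refl) (simp add: power_mult_distrib ac_simps)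
  have "integral\<^sup>L (iota mu) (\<lambda>z. f z * z^j * (1 + x * cnj z)^mu)
      = integral\<^sup>L (iota mu) (\<lambda>z. \<Sum>i\<le>mu. (of_nat (mu choose i) * x^i) * (f z * z^j * cnj z ^ i))"
    by (simp only: eq)
  also have "\<dots> = (\<Sum>i\<le>mu. integral\<^sup>L (iota mu) (\<lambda>z. (of_nat (mu choose i) * x^i) * (f z * z^j * cnj z ^ i)))"
    by (rule Bochner_Integration.integral_sum) (use int_mu_fmon[OF L2 _ j] in auto)
  also have "\<dots> = (\<Sum>i\<le>mu. (of_nat (mu choose i) * x^i) * integral\<^sup>L (iota mu) (\<lambda>z. f z * z^j * cnj z ^ i))"
    by (intro sum.cong refl integral_mult_right_zero)
  finally have I: "integral\<^sup>L (iota mu) (\<lambda>z. f z * z^j * (1 + x * cnj z)^mu)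
      = (\<Sum>i\<le>mu. (of_nat (mu choose i) * x^i) * integral\<^sup>L (iota mu) (\<lambda>z. f z * z^j * cnj z ^ i))" .
  show "Rstar mu f (\<lambda>x. x^j) x = poly (\<Sum>i\<le>mu. monom (of_nat (mu choose i) / (of_nat mu + 1) * integral\<^sup>L (iota mu) (\<lambda>z. f z * z^j * cnj z ^ i)) i) x"
    unfolding Rstar_def I by (simp add: poly_sum poly_monom sum_distrib_left ac_simps)
qed

lemma as_poly_poly: "as_poly (poly P) = P"
  unfolding as_poly_def by (rule the_equality) (auto simp: poly_eq_poly_eq_iff)

lemma coeff_sum_monom:
  fixes a :: "nat \<Rightarrow> complex"
  assumes "j \<le> mu"
  shows "coeff (\<Sum>i\<le>mu. monom (a i) i) j = a j"
  using assms by (simp add: coeff_sum coeff_monom)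

lemma trace_eq:
  assumes L2: "L2_iota f"
  shows "trace_H mu (Rstar mu f) = integral\<^sup>L (iota 0) (\<lambda>s. f s * complex_of_real 1)"
proof -
  have mf[measurable]: "f \<in> borel_measurable borel" using L2 unfolding L2_iota_def by simp
  have fi: "integrable (iota 0) f" by (rule L2_integrable[OF L2])
  define r where "r j s = (cmod s)^(2*j) / wt mu s" for j s
  have r_meas[measurable]: "r j \<in> borel_measurable borel" for j unfolding r_def by measurable
  have r_bd: "\<bar>r j s\<bar> \<le> 1" if "j \<le> mu" for j s
  proof -
    have "(cmod s)^(2*j) \<le> wt mu s" using pow_le_onepow[of "cmod s" "2*j" mu] that by (simp add: wt_def)
    then show ?thesis unfolding r_def using wt_pos[of mu s] by (simp add: abs_div_pos divide_le_eq)
  qed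
  have ri: "integrable (iota 0) (\<lambda>s. f s * complex_of_real (r j s))" if "j \<le> mu" for j
    by (rule int_fb[OF fi, where M=1]) (use r_bd[OF that] in auto)
  have cj: "coeff (as_poly (Rstar mu f (\<lambda>x. x^j))) j = of_nat (mu choose j) * integral\<^sup>L (iota 0) (\<lambda>s. f s * complex_of_real (r j s))"
    if j: "j \<le> mu" for j
  proof -
    have "coeff (as_poly (Rstar mu f (\<lambda>x. x^j))) j
        = of_nat (mu choose j) / (of_nat mu + 1) * integral\<^sup>L (iota mu) (\<lambda>z. f z * z^j * cnj z ^ j)"
      unfolding Rstar_monomial[OF L2 j] as_poly_poly by (rule coeff_sum_monom[OF j])
    also have "integral\<^sup>L (iota mu) (\<lambda>z. f z * z^j * cnj z ^ j)
        = (real mu + 1) * integral\<^sup>L (iota 0) (\<lambda>z. f z * z^j * cnj z ^ j / complex_of_real (wt mu z))"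
      by (rule integral_iota_transfer) measurable
    also have "integral\<^sup>L (iota 0) (\<lambda>z. f z * z^j * cnj z ^ j / complex_of_real (wt mu z))
        = integral\<^sup>L (iota 0) (\<lambda>s. f s * complex_of_real (r j s))"
    proof (rule Bochner_Integration.integral_cong[OF refl])
      fix s :: complex
      have "s^j * cnj s ^ j = complex_of_real ((cmod s)^(2*j))"
        by (simp only: power_mult_distrib[symmetric] complex_norm_square[symmetric] of_real_power power_mult)
      then show "f s * s^j * cnj s ^ j / complex_of_real (wt mu s) = f s * complex_of_real (r j s)"
        unfolding r_def by (simp add: mult.assoc)
    qed
    finally show ?thesis using of_nat_plus1_nz[of mu] by simp
  qed
  have "trace_H mu (Rstar mu f) = (\<Sum>j\<le>mu. of_nat (mu choose j) * integral\<^sup>L (iota 0) (\<lambda>s. f s * complex_of_real (r j s)))"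
    unfolding trace_H_def by (intro sum.cong refl) (simp add: cj)
  also have "\<dots> = (\<Sum>j\<le>mu. integral\<^sup>L (iota 0) (\<lambda>s. of_nat (mu choose j) * (f s * complex_of_real (r j s))))"
    by (intro sum.cong refl integral_mult_right_zero[symmetric])
  also have "\<dots> = integral\<^sup>L (iota 0) (\<lambda>s. \<Sum>j\<le>mu. of_nat (mu choose j) * (f s * complex_of_real (r j s)))"
    by (rule Bochner_Integration.integral_sum[symmetric]) (use ri in auto)
  also have "\<dots> = integral\<^sup>L (iota 0) (\<lambda>s. f s * complex_of_real 1)"
  proof (rule Bochner_Integration.integral_cong[OF refl])
    fix s
    have "(\<Sum>j\<le>mu. real (mu choose j) * r j s) = (\<Sum>j\<le>mu. real (mu choose j) * ((cmod s)^2)^j * 1^(mu - j)) / wt mu s"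
      unfolding r_def by (simp add: sum_divide_distrib power_mult)
    also have "(\<Sum>j\<le>mu. real (mu choose j) * ((cmod s)^2)^j * 1^(mu - j)) = ((cmod s)^2 + 1)^mu"
      by (rule binomial_ring[symmetric])
    also have "((cmod s)^2 + 1)^mu / wt mu s = 1" using wt_pos[of mu s] onepos[of s] by (simp add: wt_def add.commute)
    finally have "(\<Sum>j\<le>mu. real (mu choose j) * r j s) = 1" .
    then have "complex_of_real (\<Sum>j\<le>mu. real (mu choose j) * r j s) = complex_of_real 1" by simp
    then have "(\<Sum>j\<le>mu. of_nat (mu choose j) * complex_of_real (r j s)) = complex_of_real 1" by simp
    then show "(\<Sum>j\<le>mu. of_nat (mu choose j) * (f s * complex_of_real (r j s))) = f s * complex_of_real 1"
      by (simp add: sum_distrib_left[symmetric] ac_simps)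
  qed
  finally show ?thesis .
qed

lemma sum_inner_gp:
  assumes L2: "L2_iota f"
  shows "(\<Sum>j\<le>mu. inner_H mu (Rstar mu f (poly (gp mu z j))) (poly (gp mu z j)))
       = integral\<^sup>L (iota 0) (\<lambda>s. f s * complex_of_real 1)"
proof -
  have fi: "integrable (iota 0) f" by (rule L2_integrable[OF L2])
  have gi: "integrable (iota 0) (\<lambda>s. f s * complex_of_real (Gj mu j z s))" if "j \<le> mu" for j
    by (rule int_fb[OF fi, where M=1]) (use Gj_le1[OF that] Gj_nonneg in auto)
  have "(\<Sum>j\<le>mu. inner_H mu (Rstar mu f (poly (gp mu z j))) (poly (gp mu z j)))
      = (\<Sum>j\<le>mu. integral\<^sup>L (iota 0) (\<lambda>s. f s * complex_of_real (Gj mu j z s)))"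
    by (intro sum.cong refl) (simp add: inner_gp[OF L2])
  also have "\<dots> = integral\<^sup>L (iota 0) (\<lambda>s. \<Sum>j\<le>mu. f s * complex_of_real (Gj mu j z s))"
    by (rule Bochner_Integration.integral_sum[symmetric]) (use gi in auto)
  also have "\<dots> = integral\<^sup>L (iota 0) (\<lambda>s. f s * complex_of_real 1)"
  proof (rule Bochner_Integration.integral_cong[OF refl])
    fix s
    have "(\<Sum>j\<le>mu. complex_of_real (Gj mu j z s)) = complex_of_real 1"
      using sum_Gj[of mu z s] by (simp only: of_real_sum[symmetric])
    then show "(\<Sum>j\<le>mu. f s * complex_of_real (Gj mu j z s)) = f s * complex_of_real 1"
      by (simp add: sum_distrib_left[symmetric])
  qed
  finally show ?thesis .
qed

theorem mainTheorem4:
  fixes mu k :: nat and f :: "complex \<Rightarrow> complex"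
  assumes "k \<le> mu"
    and "L2_iota f"
    and "psd_H mu (Rstar mu f)"
  shows "\<forall>z. 0 \<le> E_op mu k f z \<and> E_op mu k f z \<le> trace_H mu (Rstar mu f)"
proof
  fix z
  define v where "v j = inner_H mu (Rstar mu f (poly (gp mu z j))) (poly (gp mu z j))" for j
  have v0: "0 \<le> v j" if "j \<le> mu" for j
  proof -
    have "poly (gp mu z j) \<in> Hmu mu"
      unfolding Hmu_def using degree_gp[OF that, of z] by auto
    then show ?thesis using assms(3) unfolding psd_H_def v_def by blast
  qed
  have E: "E_op mu k f z = v k"
    unfolding v_def E_op_eq[OF assms(2,1)] inner_gp[OF assms(2,1)] ..
  have Tr: "trace_H mu (Rstar mu f) = (\<Sum>j\<le>mu. v j)"
    unfolding v_def trace_eq[OF assms(2)] sum_inner_gp[OF assms(2)] ..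
  have "(\<Sum>j\<le>mu. v j) = v k + (\<Sum>j\<in>{..mu} - {k}. v j)"
    using assms(1) by (subst sum.remove[of "{..mu}" k]) auto
  moreover have "0 \<le> (\<Sum>j\<in>{..mu} - {k}. v j)"
    by (rule sum_nonneg) (use v0 in auto)
  ultimately have "v k \<le> (\<Sum>j\<le>mu. v j)" by simp
  then show "0 \<le> E_op mu k f z \<and> E_op mu k f z \<le> trace_H mu (Rstar mu f)"
    using E Tr v0[OF assms(1)] by simp
qed


end
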